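(* Let $H$ be a complex Hilbert space, $A\in B(H)$ a nonzero positive semidefinite operator with closed range, and $T\in B_{A^{1/2}}(H)$. Then every $\lambda\in\mathbb C$ with $|\lambda|>\|T\|_A$ belongs to $\rho_A(T)$.
   Context: $\|x\|_A=\langle Ax,x\rangle^{1/2}$. For $S\in B(H)$, $\|S\|_A=\sup\{\|Sx\|_A : x\in\overline{R(A)},\ \|x\|_A=1\}$. $B_{A^{1/2}}(H)=\{S\in B(H): R(S^*A^{1/2})\subset R(A^{1/2})\}$. $S\in B_{A^{1/2}}(H)$ is $A$-invertible in $B_{A^{1/2}}(H)$ if there is a nonzero $R\in B_{A^{1/2}}(H)$ with $ASR=ARS=A$; $\rho_A(S)=\{\lambda\in\mathbb C:\lambda I-S$ is $A$-invertible in $B_{A^{1/2}}(H)\}$. *)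

theory Defs
  imports "HOL-Analysis.Analysis"
begin

class chilbert_space = real_normed_vector + complete_space +
  fixes scaleC :: "complex \<Rightarrow> 'a \<Rightarrow> 'a"
    and cinner :: "'a \<Rightarrow> 'a \<Rightarrow> complex"
  assumes scaleC_add_right: "scaleC a (x + y) = scaleC a x + scaleC a y"
    and scaleC_add_left: "scaleC (a + b) x = scaleC a x + scaleC b x"
    and scaleC_scaleC: "scaleC a (scaleC b x) = scaleC (a * b) x"
    and scaleC_one: "scaleC 1 x = x"
    and scaleC_of_real: "scaleC (complex_of_real r) x = scaleR r x"
    and cinner_commute: "cinner x y = cnj (cinner y x)"
    and cinner_add_left: "cinner (x + y) z = cinner x z + cinner y z"
    and cinner_scaleC_left: "cinner (scaleC a x) y = a * cinner x y"
    and cinner_self_real: "Im (cinner x x) = 0"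
    and cinner_self_nonneg: "0 \<le> Re (cinner x x)"
    and cinner_self_eq_zero: "cinner x x = 0 \<longleftrightarrow> x = 0"
    and norm_eq_sqrt_cinner: "norm x = sqrt (Re (cinner x x))"

definition bounded_op :: "('a::chilbert_space \<Rightarrow> 'a) \<Rightarrow> bool" where
  "bounded_op S \<longleftrightarrow>
     (\<forall>x y. S (x + y) = S x + S y) \<and>
     (\<forall>c x. S (scaleC c x) = scaleC c (S x)) \<and>
     (\<exists>K. \<forall>x. norm (S x) \<le> norm x * K)"

definition adjoint :: "('a::chilbert_space \<Rightarrow> 'a) \<Rightarrow> ('a \<Rightarrow> 'a)" where
  "adjoint S = (THE T. \<forall>x y. cinner (S x) y = cinner x (T y))"

definition positive_op :: "('a::chilbert_space \<Rightarrow> 'a) \<Rightarrow> bool" where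
  "positive_op A \<longleftrightarrow> bounded_op A \<and>
     (\<forall>x. Im (cinner (A x) x) = 0 \<and> 0 \<le> Re (cinner (A x) x))"

definition op_sqrt :: "('a::chilbert_space \<Rightarrow> 'a) \<Rightarrow> ('a \<Rightarrow> 'a)" where
  "op_sqrt A = (THE B. positive_op B \<and> B \<circ> B = A)"

definition A_norm :: "('a::chilbert_space \<Rightarrow> 'a) \<Rightarrow> 'a \<Rightarrow> real" where
  "A_norm A x = sqrt (Re (cinner (A x) x))"

definition A_opnorm :: "('a::chilbert_space \<Rightarrow> 'a) \<Rightarrow> ('a \<Rightarrow> 'a) \<Rightarrow> real" where
  "A_opnorm A S = Sup {A_norm A (S x) | x. x \<in> closure (range A) \<and> A_norm A x = 1}"

definition B_Ahalf :: "('a::chilbert_space \<Rightarrow> 'a) \<Rightarrow> ('a \<Rightarrow> 'a) set" where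
  "B_Ahalf A = {S. bounded_op S \<and> range (adjoint S \<circ> op_sqrt A) \<subseteq> range (op_sqrt A)}"

definition A_invertible :: "('a::chilbert_space \<Rightarrow> 'a) \<Rightarrow> ('a \<Rightarrow> 'a) \<Rightarrow> bool" where
  "A_invertible A S \<longleftrightarrow> S \<in> B_Ahalf A \<and>
     (\<exists>R \<in> B_Ahalf A. R \<noteq> (\<lambda>x. 0) \<and> A \<circ> S \<circ> R = A \<and> A \<circ> R \<circ> S = A)"

definition A_resolvent :: "('a::chilbert_space \<Rightarrow> 'a) \<Rightarrow> ('a \<Rightarrow> 'a) \<Rightarrow> complex set" where
  "A_resolvent A S = {l. A_invertible A (\<lambda>x. scaleC l x - S x)}"

end

theory Submission
  imports Defs "HOL-Computational_Algebra.Formal_Power_Series"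
begin


subclass (in chilbert_space) banach ..

lemma scaleC_zero_left [simp]: "scaleC 0 x = 0"
  using scaleC_of_real[of 0 x] by simp

lemma scaleC_zero_right [simp]: "scaleC a 0 = 0"
  using scaleC_add_right[of a 0 0] by simp

lemma scaleC_minus_right: "scaleC a (- x) = - scaleC a x"
proof -
  have "scaleC a x + scaleC a (- x) = 0" using scaleC_add_right[of a x "-x"] by simp
  then show ?thesis by (simp add: add_eq_0_iff)
qed

lemma scaleC_diff_right: "scaleC a (x - y) = scaleC a x - scaleC a y"
  using scaleC_add_right[of a x "-y"] scaleC_minus_right by simp

lemma scaleC_minus_left: "scaleC (- a) x = - scaleC a x"
proof -
  have "scaleC a x + scaleC (- a) x = 0" using scaleC_add_left[of a "-a" x] by simp
  then show ?thesis by (simp add: add_eq_0_iff)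
qed

lemma scaleC_diff_left: "scaleC (a - b) x = scaleC a x - scaleC b x"
  using scaleC_add_left[of a "-b" x] scaleC_minus_left by simp

lemma scaleC_real: "scaleR r x = scaleC (complex_of_real r) x"
  by (simp add: scaleC_of_real)

lemma cinner_zero_left [simp]: "cinner 0 y = 0"
  using cinner_add_left[of 0 0 y] by simp

lemma cinner_zero_right [simp]: "cinner x 0 = 0"
  using cinner_commute[of x 0] by simp

lemma cinner_minus_left: "cinner (- x) y = - cinner x y"
proof -
  have "cinner x y + cinner (- x) y = 0" using cinner_add_left[of x "-x" y] by simp
  then show ?thesis by (simp add: add_eq_0_iff)
qed

lemma cinner_diff_left: "cinner (x - z) y = cinner x y - cinner z y"
  using cinner_add_left[of x "-z" y] cinner_minus_left by simp

lemma cinner_add_right: "cinner x (y + z) = cinner x y + cinner x z"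
  by (subst (1 2 3) cinner_commute) (simp add: cinner_add_left)

lemma cinner_minus_right: "cinner x (- y) = - cinner x y"
  by (subst (1 2) cinner_commute) (simp add: cinner_minus_left)

lemma cinner_diff_right: "cinner x (y - z) = cinner x y - cinner x z"
  by (subst (1 2 3) cinner_commute) (simp add: cinner_diff_left)

lemma cinner_scaleC_right: "cinner x (scaleC a y) = cnj a * cinner x y"
  by (subst (1 2) cinner_commute) (simp add: cinner_scaleC_left)

lemma cinner_scaleR_left: "cinner (scaleR r x) y = complex_of_real r * cinner x y"
  by (simp add: scaleC_real cinner_scaleC_left)

lemma cinner_scaleR_right: "cinner x (scaleR r y) = complex_of_real r * cinner x y"
  by (simp add: scaleC_real cinner_scaleC_right)

lemma cinner_self: "cinner x x = complex_of_real ((norm x)^2)"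
proof -
  have "(norm x)^2 = Re (cinner x x)" using norm_eq_sqrt_cinner[of x] cinner_self_nonneg[of x] by simp
  then show ?thesis using cinner_self_real[of x] by (simp add: complex_eq_iff)
qed

lemma Re_cinner_self: "Re (cinner x x) = (norm x)^2"
  by (simp add: cinner_self)

lemma norm_scaleC: "norm (scaleC a x) = cmod a * norm x"
proof -
  have "cinner (scaleC a x) (scaleC a x) = (a * cnj a) * cinner x x"
    by (simp add: cinner_scaleC_left cinner_scaleC_right)
  also have "\<dots> = complex_of_real ((cmod a * norm x)^2)"
    by (simp add: complex_norm_square[symmetric] cinner_self power_mult_distrib)
  finally have "complex_of_real ((norm (scaleC a x))^2) = complex_of_real ((cmod a * norm x)^2)"
    by (simp only: cinner_self)
  hence "(norm (scaleC a x))^2 = (cmod a * norm x)^2" by (simp only: of_real_eq_iff)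
  thus ?thesis by (simp add: power2_eq_iff_nonneg)
qed

lemma cinner_cauchy_schwarz: "cmod (cinner x y) \<le> norm x * norm y"
proof (cases "y = 0")
  case True then show ?thesis by simp
next
  case False
  define c where "c = cinner x y / cinner y y"
  have yy: "cinner y y = complex_of_real ((norm y)^2)" by (rule cinner_self)
  have ny: "norm y > 0" using False by simp
  have "0 \<le> Re (cinner (x - scaleC c y) (x - scaleC c y))" by (rule cinner_self_nonneg)
  also have "cinner (x - scaleC c y) (x - scaleC c y)
      = cinner x x - cnj c * cinner x y - c * cinner y x + c * cnj c * cinner y y"
    by (simp add: cinner_diff_left cinner_diff_right cinner_scaleC_left cinner_scaleC_right algebra_simps)
  also have "\<dots> = cinner x x - cinner x y * cnj (cinner x y) / complex_of_real ((norm y)^2)"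
    using ny by (simp add: c_def yy cinner_commute[of y x] field_simps)
  finally have "0 \<le> (norm x)^2 - (cmod (cinner x y))^2 / (norm y)^2"
    by (simp add: cinner_self complex_norm_square[symmetric] del: of_real_power)
  then have "(cmod (cinner x y))^2 \<le> (norm x * norm y)^2"
    using ny by (simp add: field_simps power_mult_distrib cmod_power2)
  then show ?thesis by (simp add: power_mono_iff abs_le_square_iff)
qed

lemma cinner_eq_zeroI: "(\<And>y. cinner x y = 0) \<Longrightarrow> x = 0"
  using cinner_self_eq_zero by blast

lemma cinner_ext: "(\<And>y. cinner x y = cinner z y) \<Longrightarrow> x = z"
  using cinner_eq_zeroI[of "x - z"] by (simp add: cinner_diff_left)

lemma cinner_ext_right: "(\<And>y. cinner y x = cinner y z) \<Longrightarrow> x = z"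
proof -
  assume a: "\<And>y. cinner y x = cinner y z"
  have "cinner (x - z) y = 0" for y
    using a[of y] by (subst cinner_commute) (simp add: cinner_diff_right)
  then show ?thesis using cinner_eq_zeroI[of "x - z"] by simp
qed

lemma bounded_bilinear_cinner: "bounded_bilinear cinner"
proof
  show "cinner (a + a') b = cinner a b + cinner a' b" for a a' b by (rule cinner_add_left)
  show "cinner a (b + b') = cinner a b + cinner a b'" for a b b' by (rule cinner_add_right)
  show "cinner (scaleR r a) b = scaleR r (cinner a b)" for r a b by (simp add: cinner_scaleR_left scaleR_conv_of_real)
  show "cinner a (scaleR r b) = scaleR r (cinner a b)" for r a b by (simp add: cinner_scaleR_right scaleR_conv_of_real)
  show "\<exists>K. \<forall>a b. norm (cinner a b) \<le> norm a * norm b * K"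
    by (rule exI[of _ 1]) (simp add: cinner_cauchy_schwarz)
qed

lemma norm_sq_cinner: "(norm (x + y))^2 = (norm x)^2 + (norm y)^2 + 2 * Re (cinner x y)"
proof -
  have "(norm (x+y))^2 = Re (cinner (x+y) (x+y))" by (simp add: Re_cinner_self)
  also have "\<dots> = (norm x)^2 + (norm y)^2 + Re (cinner x y) + Re (cinner y x)"
    by (simp add: cinner_add_left cinner_add_right Re_cinner_self)
  also have "Re (cinner y x) = Re (cinner x y)" by (subst cinner_commute) simp
  finally show ?thesis by simp
qed

lemma norm_sq_cinner_diff: "(norm (x - y))^2 = (norm x)^2 + (norm y)^2 - 2 * Re (cinner x y)"
  using norm_sq_cinner[of x "-y"] by (simp add: cinner_minus_right)



lemma bop_add: "bounded_op S \<Longrightarrow> S (x + y) = S x + S y"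
  unfolding bounded_op_def by blast

lemma bop_scaleC: "bounded_op S \<Longrightarrow> S (scaleC c x) = scaleC c (S x)"
  unfolding bounded_op_def by blast

lemma bop_bound: "bounded_op S \<Longrightarrow> \<exists>K>0. \<forall>x. norm (S x) \<le> norm x * K"
proof -
  assume "bounded_op S"
  then obtain K where K: "\<forall>x. norm (S x) \<le> norm x * K" unfolding bounded_op_def by blast
  have "norm (S x) \<le> norm x * max K 1" for x
    using K[rule_format, of x] by (smt (verit) mult_left_mono norm_ge_zero)
  then show ?thesis by (intro exI[of _ "max K 1"]) auto
qed

lemma bop_scaleR: "bounded_op S \<Longrightarrow> S (scaleR r x) = scaleR r (S x)"
  by (simp add: scaleC_real bop_scaleC)

lemma bop_bounded_linear: "bounded_op S \<Longrightarrow> bounded_linear S"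
proof -
  assume S: "bounded_op S"
  then obtain K where K: "\<forall>x. norm (S x) \<le> norm x * K" unfolding bounded_op_def by blast
  show ?thesis
    by (rule bounded_linear_intro[of _ K]) (use S K bop_add bop_scaleR in auto)
qed

lemma bop_zero [simp]: "bounded_op S \<Longrightarrow> S 0 = 0"
  using bop_bounded_linear linear_simps(3) by blast

lemma bop_diff: "bounded_op S \<Longrightarrow> S (x - y) = S x - S y"
  using bop_add[of S "x - y" y] by (simp add: algebra_simps)

lemma bop_minus: "bounded_op S \<Longrightarrow> S (- x) = - S x"
  using bop_diff[of S 0 x] by simp

lemma bop_cont: "bounded_op S \<Longrightarrow> continuous_on UNIV S"
  using bop_bounded_linear linear_continuous_on by blast

lemma bop_tendsto: "bounded_op S \<Longrightarrow> (f \<longlongrightarrow> l) F \<Longrightarrow> ((\<lambda>n. S (f n)) \<longlongrightarrow> S l) F"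
  using bop_bounded_linear bounded_linear.tendsto by blast

lemma bop_suminf: "bounded_op S \<Longrightarrow> summable f \<Longrightarrow> S (suminf f) = (\<Sum>n. S (f n))"
  using bop_bounded_linear bounded_linear.suminf by metis

lemma bop_sum: "bounded_op S \<Longrightarrow> S (sum f I) = (\<Sum>i\<in>I. S (f i))"
  by (induction I rule: infinite_finite_induct) (auto simp: bop_add)

lemma bop_comp: "bounded_op S \<Longrightarrow> bounded_op T \<Longrightarrow> bounded_op (S \<circ> T)"
proof -
  assume S: "bounded_op S" and T: "bounded_op T"
  obtain K1 where K1: "K1 > 0" "\<forall>x. norm (S x) \<le> norm x * K1" using bop_bound[OF S] by blast
  obtain K2 where K2: "K2 > 0" "\<forall>x. norm (T x) \<le> norm x * K2" using bop_bound[OF T] by blast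
  have "norm (S (T x)) \<le> norm x * (K2 * K1)" for x
  proof -
    have "norm (S (T x)) \<le> norm (T x) * K1" using K1 by blast
    also have "\<dots> \<le> (norm x * K2) * K1" using K2 K1(1) by (simp add: mult_right_mono)
    finally show ?thesis by (simp add: mult.assoc)
  qed
  then show ?thesis using S T unfolding bounded_op_def by (auto simp: o_def)
qed

lemma bop_comp': "bounded_op S \<Longrightarrow> bounded_op T \<Longrightarrow> bounded_op (\<lambda>x. S (T x))"
  using bop_comp[of S T] by (simp add: o_def)

lemma bop_id: "bounded_op (\<lambda>x. x)"
  unfolding bounded_op_def by (auto intro: exI[of _ 1])

lemma bop_lincomb: "bounded_op S \<Longrightarrow> bounded_op T \<Longrightarrow> bounded_op (\<lambda>x. scaleC a (S x) + scaleC b (T x))"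
proof -
  assume S: "bounded_op S" and T: "bounded_op T"
  obtain K1 where K1: "K1 > 0" "\<forall>x. norm (S x) \<le> norm x * K1" using bop_bound[OF S] by blast
  obtain K2 where K2: "K2 > 0" "\<forall>x. norm (T x) \<le> norm x * K2" using bop_bound[OF T] by blast
  have "norm (scaleC a (S x) + scaleC b (T x)) \<le> norm x * (cmod a * K1 + cmod b * K2)" for x
  proof -
    have "norm (scaleC a (S x) + scaleC b (T x)) \<le> cmod a * norm (S x) + cmod b * norm (T x)"
      using norm_triangle_ineq[of "scaleC a (S x)" "scaleC b (T x)"] by (simp add: norm_scaleC)
    also have "\<dots> \<le> cmod a * (norm x * K1) + cmod b * (norm x * K2)"
      using K1 K2 by (intro add_mono mult_left_mono) auto
    finally show ?thesis by (simp add: algebra_simps)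
  qed
  moreover have "scaleC a (S (x + y)) + scaleC b (T (x + y)) =
     (scaleC a (S x) + scaleC b (T x)) + (scaleC a (S y) + scaleC b (T y))" for x y
    using S T by (simp add: bop_add scaleC_add_right algebra_simps)
  moreover have "scaleC a (S (scaleC c x)) + scaleC b (T (scaleC c x)) =
     scaleC c (scaleC a (S x) + scaleC b (T x))" for c x
    using S T by (simp add: bop_scaleC scaleC_add_right scaleC_scaleC mult.commute)
  ultimately show ?thesis unfolding bounded_op_def by blast
qed

lemma bop_diff_op: "bounded_op S \<Longrightarrow> bounded_op T \<Longrightarrow> bounded_op (\<lambda>x. S x - T x)"
  using bop_lincomb[of S T 1 "-1"] by (simp add: scaleC_one scaleC_minus_left)

lemma bop_scaleC_op: "bounded_op S \<Longrightarrow> bounded_op (\<lambda>x. scaleC a (S x))"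
  using bop_lincomb[of S S a 0] by simp

definition csubspace :: "'a::chilbert_space set \<Rightarrow> bool" where
  "csubspace M \<longleftrightarrow> 0 \<in> M \<and> (\<forall>x\<in>M. \<forall>y\<in>M. x + y \<in> M) \<and> (\<forall>c. \<forall>x\<in>M. scaleC c x \<in> M)"

lemma csubspace_scaleR: "csubspace M \<Longrightarrow> x \<in> M \<Longrightarrow> scaleR r x \<in> M"
  unfolding csubspace_def by (simp add: scaleC_real)

lemma csubspace_diff: "csubspace M \<Longrightarrow> x \<in> M \<Longrightarrow> y \<in> M \<Longrightarrow> x - y \<in> M"
  unfolding csubspace_def
  by (metis (no_types, lifting) diff_conv_add_uminus scaleC_minus_left scaleC_one)

lemma csubspace_sum: "csubspace M \<Longrightarrow> (\<And>i. i \<in> I \<Longrightarrow> f i \<in> M) \<Longrightarrow> sum f I \<in> M"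
  unfolding csubspace_def
  by (induction I rule: infinite_finite_induct) auto

lemma parallelogram: "(norm (a + b :: 'a::chilbert_space))^2 + (norm (a - b))^2 = 2 * (norm a)^2 + 2 * (norm b)^2"
  using norm_sq_cinner[of a b] norm_sq_cinner_diff[of a b] by simp

lemma orth_proj_exists:
  assumes M: "csubspace M" "closed M"
  shows "\<exists>m\<in>M. \<forall>z\<in>M. cinner (x - m) z = 0"
proof -
  define D where "D = (\<lambda>m. (norm (x - m))^2) ` M"
  define d where "d = Inf D"
  have ne: "D \<noteq> {}" using M unfolding D_def csubspace_def by auto
  have bdd: "bdd_below D" unfolding D_def by (rule bdd_belowI[of _ 0]) auto
  have dle: "d \<le> (norm (x - m))^2" if "m \<in> M" for m
    unfolding d_def D_def by (rule cInf_lower) (use that bdd[unfolded D_def] in auto)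
  have "\<exists>m\<in>M. (norm (x - m))^2 < d + 1 / (real n + 1)" for n
  proof -
    have "Inf D < d + 1 / (real n + 1)" unfolding d_def by simp
    from cInf_lessD[OF ne this] show ?thesis unfolding D_def by auto
  qed
  then obtain m where m: "\<And>n. m n \<in> M" "\<And>n. (norm (x - m n))^2 < d + 1 / (real n + 1)"
    by metis
  have key: "(norm (m i - m j))^2 \<le> 2 / (real i + 1) + 2 / (real j + 1)" for i j
  proof -
    have mid: "scaleR (1/2) (m i + m j) \<in> M"
      using M(1) m(1) unfolding csubspace_def by (simp add: scaleC_real)
    have e: "x - m i + (x - m j) = scaleR 2 (x - scaleR (1/2) (m i + m j))"
      by (simp add: algebra_simps scaleR_2)
    have "(norm (x - m i + (x - m j)))^2 = 4 * (norm (x - scaleR (1/2) (m i + m j)))^2"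
      unfolding e by (simp add: power_mult_distrib)
    moreover have "x - m i - (x - m j) = m j - m i" by simp
    moreover have "norm (m j - m i) = norm (m i - m j)" by (rule norm_minus_commute)
    ultimately have "(norm (m i - m j))^2 = 2 * (norm (x - m i))^2 + 2 * (norm (x - m j))^2
        - 4 * (norm (x - scaleR (1/2) (m i + m j)))^2"
      using parallelogram[of "x - m i" "x - m j"] by simp
    then show ?thesis using dle[OF mid] m(2)[of i] m(2)[of j] by simp
  qed
  have "Cauchy m"
  proof (rule CauchyI)
    fix e :: real assume e: "0 < e"
    obtain N :: nat where N: "4 / (e^2) < real N" using reals_Archimedean2 by blast
    have "norm (m i - m j) < e" if "i \<ge> N" "j \<ge> N" for i j
    proof -
      have "2 / (real i + 1) \<le> 2 / (real N + 1)" "2 / (real j + 1) \<le> 2 / (real N + 1)"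
        using that by (auto intro!: divide_left_mono)
      then have "(norm (m i - m j))^2 \<le> 4 / (real N + 1)" using key[of i j] by simp
      also have "\<dots> < e^2" using N e by (simp add: field_simps) (smt (verit) zero_less_power)
      finally show ?thesis using e by (simp add: power_less_imp_less_base)
    qed
    then show "\<exists>N. \<forall>i\<ge>N. \<forall>j\<ge>N. norm (m i - m j) < e" by blast
  qed
  then obtain m0 where lim: "m \<longlonglongrightarrow> m0" using Cauchy_convergent_iff convergent_def by blast
  have m0M: "m0 \<in> M" using closed_sequentially[OF M(2) m(1) lim] .
  have "(\<lambda>n. (norm (x - m n))^2) \<longlonglongrightarrow> (norm (x - m0))^2"
    by (intro tendsto_intros lim)
  moreover have "(\<lambda>n. d + 1 / (real n + 1)) \<longlonglongrightarrow> d + 0"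
    by (intro tendsto_intros) (use LIMSEQ_inverse_real_of_nat in \<open>simp add: inverse_eq_divide add.commute\<close>)
  ultimately have "(norm (x - m0))^2 \<le> d + 0"
    by (rule LIMSEQ_le) (use m(2) less_imp_le in blast)
  then have best: "(norm (x - m0))^2 \<le> (norm (x - y))^2" if "y \<in> M" for y
    using dle[OF that] by linarith
  have "cinner (x - m0) z = 0" if z: "z \<in> M" for z
  proof -
    define u where "u = x - m0"
    define w where "w = cinner u z"
    define t :: real where "t = 1 / ((norm z)^2 + 1)"
    have p: "0 < 1 + (norm z)^2" by (simp add: add_pos_nonneg)
    have t: "t > 0" "t * (norm z)^2 < 1" unfolding t_def using p by (auto simp: field_simps)
    define c where "c = complex_of_real t * w"
    have "m0 + scaleC c z \<in> M" using M(1) m0M z unfolding csubspace_def by auto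
    then have "(norm u)^2 \<le> (norm (u - scaleC c z))^2"
      using best unfolding u_def by (simp add: diff_diff_eq)
    also have "\<dots> = (norm u)^2 + (cmod c * norm z)^2 - 2 * Re (cinner u (scaleC c z))"
      by (simp add: norm_sq_cinner_diff norm_scaleC)
    also have "cinner u (scaleC c z) = complex_of_real (t * (cmod w)^2)"
      by (simp add: cinner_scaleC_right c_def w_def complex_norm_square[symmetric] mult.commute)
    also have "cmod c = t * cmod w" using t by (simp add: c_def norm_mult)
    finally have "0 \<le> (t * cmod w * norm z)^2 - 2 * (t * (cmod w)^2)" by simp
    then have "0 \<le> t * (cmod w)^2 * (t * (norm z)^2 - 2)" by (simp add: algebra_simps power2_eq_square)
    moreover have "t * (norm z)^2 - 2 < 0" using t by simp
    ultimately have "t * (cmod w)^2 \<le> 0" by (simp add: mult_le_0_iff zero_le_mult_iff)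
    then have "cmod w = 0" using t by (simp add: mult_le_0_iff)
    then show ?thesis unfolding w_def u_def by simp
  qed
  then show ?thesis using m0M by blast
qed


definition proj :: "'a::chilbert_space set \<Rightarrow> 'a \<Rightarrow> 'a" where
  "proj M x = (SOME m. m \<in> M \<and> (\<forall>z\<in>M. cinner (x - m) z = 0))"

lemma proj: "csubspace M \<Longrightarrow> closed M \<Longrightarrow> proj M x \<in> M \<and> (\<forall>z\<in>M. cinner (x - proj M x) z = 0)"
proof -
  assume "csubspace M" "closed M"
  then have "\<exists>m. m \<in> M \<and> (\<forall>z\<in>M. cinner (x - m) z = 0)" using orth_proj_exists[of M x] by blast
  then show ?thesis unfolding proj_def by (rule someI_ex)
qed

lemma proj_unique:
  assumes M: "csubspace M" "closed M" and m: "m \<in> M" "\<forall>z\<in>M. cinner (x - m) z = 0"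
  shows "proj M x = m"
proof -
  define p where "p = proj M x"
  have p: "p \<in> M" "\<forall>z\<in>M. cinner (x - p) z = 0" using proj[OF M] unfolding p_def by auto
  have d: "m - p \<in> M" using csubspace_diff[OF M(1) m(1) p(1)] .
  have e: "m - p = (x - p) - (x - m)" by simp
  have "cinner (m - p) (m - p) = cinner ((x - p) - (x - m)) (m - p)" by (subst e) (rule refl)
  also have "\<dots> = cinner (x - p) (m - p) - cinner (x - m) (m - p)" by (rule cinner_diff_left)
  also have "\<dots> = 0" using p(2) m(2) d by simp
  finally have "m - p = 0" by (simp only: cinner_self_eq_zero)
  then show ?thesis unfolding p_def[symmetric] by simp
qed

lemma proj_id: "csubspace M \<Longrightarrow> closed M \<Longrightarrow> m \<in> M \<Longrightarrow> proj M m = m"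
  by (rule proj_unique) auto

lemma proj_orth_zero: "csubspace M \<Longrightarrow> closed M \<Longrightarrow> (\<forall>z\<in>M. cinner n z = 0) \<Longrightarrow> proj M n = 0"
  by (rule proj_unique) (auto simp: csubspace_def)

lemma orth_in:
  assumes M: "csubspace M" "closed M" and h: "\<And>n. (\<forall>z\<in>M. cinner n z = 0) \<Longrightarrow> cinner n y = 0"
  shows "y \<in> M"
proof -
  define n where "n = y - proj M y"
  have p: "proj M y \<in> M" "\<forall>z\<in>M. cinner n z = 0" using proj[OF M] unfolding n_def by auto
  have "cinner n n = cinner n y - cinner n (proj M y)" unfolding n_def by (simp add: cinner_diff_right)
  also have "\<dots> = 0" using h[OF p(2)] p by simp
  finally have "n = 0" using cinner_self_eq_zero by auto
  then show ?thesis using p(1) unfolding n_def by simp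
qed

lemma proj_bop:
  assumes M: "csubspace M" "closed M"
  shows "bounded_op (proj M)"
proof -
  have P: "proj M x \<in> M" "\<forall>z\<in>M. cinner (x - proj M x) z = 0" for x using proj[OF M] by auto
  have add: "proj M (x + y) = proj M x + proj M y" for x y
  proof (rule proj_unique[OF M])
    show "proj M x + proj M y \<in> M" using P M(1) unfolding csubspace_def by blast
    show "\<forall>z\<in>M. cinner (x + y - (proj M x + proj M y)) z = 0"
    proof
      fix z assume "z \<in> M"
      have e: "x + y - (proj M x + proj M y) = (x - proj M x) + (y - proj M y)" by simp
      have "cinner (x + y - (proj M x + proj M y)) z = cinner (x - proj M x) z + cinner (y - proj M y) z"
        by (subst e) (rule cinner_add_left)
      then show "cinner (x + y - (proj M x + proj M y)) z = 0"
        using P \<open>z \<in> M\<close> by simp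
    qed
  qed
  have sc: "proj M (scaleC c x) = scaleC c (proj M x)" for c x
  proof (rule proj_unique[OF M])
    show "scaleC c (proj M x) \<in> M" using P M(1) unfolding csubspace_def by blast
    show "\<forall>z\<in>M. cinner (scaleC c x - scaleC c (proj M x)) z = 0"
    proof
      fix z assume z: "z \<in> M"
      have "scaleC c x - scaleC c (proj M x) = scaleC c (x - proj M x)" by (simp add: scaleC_diff_right)
      then show "cinner (scaleC c x - scaleC c (proj M x)) z = 0" using P z by (simp add: cinner_scaleC_left)
    qed
  qed
  have bd: "norm (proj M x) \<le> norm x * 1" for x
  proof -
    have "cinner (proj M x) (x - proj M x) = 0"
      using P[of x] by (subst cinner_commute) simp
    then have "(norm x)^2 = (norm (proj M x))^2 + (norm (x - proj M x))^2"
      using norm_sq_cinner[of "proj M x" "x - proj M x"] by simp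
    then have "(norm (proj M x))^2 \<le> (norm x)^2" by simp
    then show ?thesis by (simp add: power_mono_iff)
  qed
  show ?thesis unfolding bounded_op_def using add sc bd by blast
qed

lemma riesz:
  fixes phi :: "'a::chilbert_space \<Rightarrow> complex"
  assumes add: "\<And>x y. phi (x + y) = phi x + phi y"
    and sc: "\<And>c x. phi (scaleC c x) = c * phi x"
    and bd: "\<And>x. cmod (phi x) \<le> norm x * K"
  shows "\<exists>z. \<forall>x. phi x = cinner x z"
proof (cases "\<forall>x. phi x = 0")
  case True then show ?thesis by (intro exI[of _ 0]) simp
next
  case False
  then obtain w where w: "phi w \<noteq> 0" by blast
  have bl: "bounded_linear phi"
    by (rule bounded_linear_intro[of _ K]) (use add sc bd in \<open>auto simp: scaleC_real scaleR_conv_of_real\<close>)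
  define N where "N = {x. phi x = 0}"
  have phi0: "phi 0 = 0" using add[of 0 0] by simp
  have NS: "csubspace N" unfolding N_def csubspace_def using phi0 add sc by auto
  have NC: "closed N" unfolding N_def
    by (rule closed_Collect_eq) (auto intro: linear_continuous_on bl)
  define u where "u = w - proj N w"
  have pN: "proj N w \<in> N" "\<forall>z\<in>N. cinner u z = 0" using proj[OF NS NC] unfolding u_def by auto
  have phiu: "phi u = phi w" unfolding u_def using pN(1) add[of "w - proj N w" "proj N w"] by (simp add: N_def)
  then have u0: "u \<noteq> 0" using w phi0 by auto
  then have uu: "cinner u u \<noteq> 0" using cinner_self_eq_zero by auto
  define z where "z = scaleC (cnj (phi u / cinner u u)) u"
  have "phi x = cinner x z" for x
  proof -
    define v where "v = x - scaleC (phi x / phi u) u"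
    have "phi x = phi (v + scaleC (phi x / phi u) u)" unfolding v_def by simp
    also have "\<dots> = phi v + (phi x / phi u) * phi u" by (simp add: add sc)
    also have "\<dots> = phi v + phi x" using phiu w by simp
    finally have "v \<in> N" by (simp add: N_def)
    then have "cinner u v = 0" using pN by blast
    then have "cinner v u = 0" by (subst cinner_commute) simp
    then have xu: "cinner x u = (phi x / phi u) * cinner u u"
      unfolding v_def by (simp add: cinner_diff_left cinner_scaleC_left)
    show ?thesis unfolding z_def cinner_scaleC_right xu using uu phiu w by (simp add: field_simps)
  qed
  then show ?thesis by blast
qed

lemma adjoint_ex:
  assumes S: "bounded_op S"
  shows "\<exists>F. \<forall>x y. cinner (S x) y = cinner x (F y)"
proof -
  obtain K where K: "K > 0" "\<forall>x. norm (S x) \<le> norm x * K" using bop_bound[OF S] by blast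
  have "\<exists>z. \<forall>x. cinner (S x) y = cinner x z" for y
  proof (rule riesz[where K="K * norm y"])
    show "cinner (S (a + b)) y = cinner (S a) y + cinner (S b) y" for a b
      using S by (simp add: bop_add cinner_add_left)
    show "cinner (S (scaleC c a)) y = c * cinner (S a) y" for c a
      using S by (simp add: bop_scaleC cinner_scaleC_left)
    show "cmod (cinner (S a) y) \<le> norm a * (K * norm y)" for a
    proof -
      have "cmod (cinner (S a) y) \<le> norm (S a) * norm y" by (rule cinner_cauchy_schwarz)
      also have "\<dots> \<le> norm a * K * norm y" using K by (simp add: mult_right_mono)
      finally show ?thesis by (simp add: mult.assoc)
    qed
  qed
  then have "\<forall>y. \<exists>z. \<forall>x. cinner (S x) y = cinner x z" by blast
  from choice[OF this] show ?thesis by blast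
qed

lemma adjoint_eq:
  assumes S: "bounded_op S" and G: "\<forall>x y. cinner (S x) y = cinner x (G y)"
  shows "adjoint S = G"
  unfolding adjoint_def
proof (rule the_equality)
  show "\<forall>x y. cinner (S x) y = cinner x (G y)" by fact
  fix F assume F: "\<forall>x y. cinner (S x) y = cinner x (F y)"
  show "F = G"
  proof
    fix y show "F y = G y"
    proof (rule cinner_ext_right)
      fix z show "cinner z (F y) = cinner z (G y)"
        using F[rule_format, of z y] G[rule_format, of z y] by simp
    qed
  qed
qed

lemma adjoint_prop:
  assumes S: "bounded_op S"
  shows "cinner (S x) y = cinner x (adjoint S y)"
proof -
  obtain F where F: "\<forall>x y. cinner (S x) y = cinner x (F y)" using adjoint_ex[OF S] by blast
  then show ?thesis using adjoint_eq[OF S F] by simp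
qed

lemma positive_herm:
  assumes A: "positive_op A"
  shows "cinner (A x) y = cinner x (A y)"
proof -
  have B: "bounded_op A" and P: "\<And>x. Im (cinner (A x) x) = 0" using A unfolding positive_op_def by auto
  define a where "a = cinner (A x) y"
  define b where "b = cinner (A y) x"
  have "Im (cinner (A (x + y)) (x + y)) = 0" by (rule P)
  then have h1: "Im (a + b) = 0"
    using P[of x] P[of y] B by (simp add: bop_add cinner_add_left cinner_add_right a_def b_def)
  have "Im (cinner (A (x + scaleC \<i> y)) (x + scaleC \<i> y)) = 0" by (rule P)
  then have h2: "Re b - Re a = 0"
    using P[of x] P[of y] B
    by (simp add: bop_add bop_scaleC cinner_add_left cinner_add_right cinner_scaleC_left cinner_scaleC_right a_def b_def)
  have "a = cnj b" using h1 h2 by (simp add: complex_eq_iff)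
  then show ?thesis unfolding a_def b_def by (subst (2) cinner_commute) simp
qed

lemma positive_re: "positive_op A \<Longrightarrow> cinner (A x) x = complex_of_real (Re (cinner (A x) x))"
  unfolding positive_op_def by (simp add: complex_eq_iff)

lemma positive_gcs:
  assumes A: "positive_op A"
  shows "(cmod (cinner (A x) y))^2 \<le> Re (cinner (A x) x) * Re (cinner (A y) y)"
proof -
  have B: "bounded_op A" and P: "\<And>x. Im (cinner (A x) x) = 0" "\<And>x. 0 \<le> Re (cinner (A x) x)"
    using A unfolding positive_op_def by auto
  define w where "w = cinner (A x) y"
  define a where "a = Re (cinner (A x) x)"
  define b where "b = Re (cinner (A y) y)"
  have yx: "cinner (A y) x = cnj w" unfolding w_def using positive_herm[OF A, of y x]
    by (subst cinner_commute) simp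
  have q: "0 \<le> a - 2 * t * (cmod w)^2 + t^2 * (cmod w)^2 * b" for t :: real
  proof -
    define c where "c = complex_of_real t * w"
    have "0 \<le> Re (cinner (A (x - scaleC c y)) (x - scaleC c y))" by (rule P)
    also have "cinner (A (x - scaleC c y)) (x - scaleC c y) =
        cinner (A x) x - cnj c * w - c * cnj w + c * cnj c * cinner (A y) y"
      using B yx by (simp add: bop_diff bop_scaleC cinner_diff_left cinner_diff_right cinner_scaleC_left
          cinner_scaleC_right w_def algebra_simps)
    also have "Re \<dots> = a - 2 * t * (cmod w)^2 + t^2 * (cmod w)^2 * b"
      unfolding c_def a_def b_def cmod_power2
      by (simp add: power2_eq_square algebra_simps)
    finally show ?thesis .
  qed
  show ?thesis
  proof (cases "w = 0")
    case True then show ?thesis using P unfolding a_def b_def w_def by simp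
  next
    case False
    then have wp: "(cmod w)^2 > 0" by simp
    show ?thesis
    proof (cases "b = 0")
      case True
      have "0 \<le> a - 2 * ((a + 1) / (2 * (cmod w)^2)) * (cmod w)^2" using q[of "(a + 1) / (2 * (cmod w)^2)"] True by simp
      also have "\<dots> = -1" using wp by (simp add: field_simps)
      finally show ?thesis by simp
    next
      case False
      then have bp: "b > 0" using P(2)[of y] unfolding b_def by simp
      have "0 \<le> a - 2 * (1/b) * (cmod w)^2 + (1/b)^2 * (cmod w)^2 * b" by (rule q)
      also have "\<dots> = (a * b - (cmod w)^2) / b" using bp by (simp add: field_simps power2_eq_square)
      finally have "0 \<le> a * b - (cmod w)^2" using bp by (simp add: divide_nonneg_pos zero_le_divide_iff)
      then show ?thesis unfolding w_def a_def b_def by simp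
    qed
  qed
qed

lemma positive_norm_bound:
  assumes A: "positive_op A" and K: "\<forall>x. norm (A x) \<le> norm x * K" and Kp: "K > 0"
  shows "(norm (A x))^2 \<le> K * Re (cinner (A x) x)"
proof (cases "A x = 0")
  case True then show ?thesis using A unfolding positive_op_def
    using Kp by simp
next
  case False
  have B: "bounded_op A" using A unfolding positive_op_def by auto
  have "(norm (A x))^2 = cmod (cinner (A x) (A x))" by (simp add: cinner_self del: of_real_power)
  then have h1: "((norm (A x))^2)^2 \<le> Re (cinner (A x) x) * Re (cinner (A (A x)) (A x))"
    using positive_gcs[OF A, of x "A x"] by simp
  have "Re (cinner (A (A x)) (A x)) \<le> norm (A (A x)) * norm (A x)"
    using cinner_cauchy_schwarz[of "A (A x)" "A x"] complex_Re_le_cmod order_trans by blast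
  also have "\<dots> \<le> norm (A x) * K * norm (A x)" using K by (simp add: mult_right_mono)
  finally have h2: "Re (cinner (A (A x)) (A x)) \<le> K * (norm (A x))^2" by (simp add: power2_eq_square mult_ac)
  have a0: "0 \<le> Re (cinner (A x) x)" using A unfolding positive_op_def by auto
  have "((norm (A x))^2)^2 \<le> Re (cinner (A x) x) * (K * (norm (A x))^2)"
    using h1 mult_left_mono[OF h2 a0] by linarith
  then have "(norm (A x))^2 * (norm (A x))^2 \<le> (K * Re (cinner (A x) x)) * (norm (A x))^2"
    by (simp add: power2_eq_square mult_ac)
  moreover have "(norm (A x))^2 > 0" using False by simp
  ultimately show ?thesis by (rule mult_right_le_imp_le)
qed


lemma suminf_eq_infsum_nat:
  fixes f :: "nat \<Rightarrow> 'b::banach"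
  assumes "summable (\<lambda>n. norm (f n))"
  shows "suminf f = infsum f UNIV"
proof -
  have "summable f" using assms summable_norm_cancel by blast
  then have "f sums suminf f" by (simp add: summable_sums)
  from norm_summable_imp_has_sum[OF assms this] show ?thesis by (simp add: infsumI)
qed

lemma cauchy_vec:
  fixes a b :: "nat \<Rightarrow> real" and v :: "nat \<Rightarrow> 'b::banach"
  assumes a0: "\<And>k. a k \<ge> 0" and b0: "\<And>k. b k \<ge> 0" and sa: "summable a" and sb: "summable b"
    and vM: "\<And>n. norm (v n) \<le> M"
  shows "(\<Sum>k. a k *\<^sub>R (\<Sum>j. b j *\<^sub>R v (k + j))) = (\<Sum>n. (\<Sum>k\<le>n. a k * b (n - k)) *\<^sub>R v n)"
proof -
  have M0: "M \<ge> 0" using vM[of 0] norm_ge_zero order_trans by blast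
  define f where "f = (\<lambda>(k,j). (a k * b j) *\<^sub>R v (k + j))"
  define g where "g = (\<lambda>(k::nat,j::nat). a k * b j * M)"
  have gk: "((\<lambda>j. g (k, j)) has_sum (a k * suminf b * M)) UNIV" for k
  proof -
    have "(\<lambda>j. a k * b j * M) sums (a k * suminf b * M)"
      using sums_mult[OF summable_sums[OF sb], of "a k"] sums_mult2[of _ _ M] by blast
    then show ?thesis unfolding g_def
      by (intro sums_nonneg_imp_has_sum) (auto intro!: mult_nonneg_nonneg a0 b0 M0)
  qed
  have gs: "(\<lambda>k. a k * suminf b * M) summable_on UNIV"
  proof -
    have "(\<lambda>k. a k * (suminf b * M)) sums (suminf a * (suminf b * M))"
      using sums_mult2[OF summable_sums[OF sa]] by blast
    then have "((\<lambda>k. a k * (suminf b * M)) has_sum (suminf a * (suminf b * M))) UNIV"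
      by (intro sums_nonneg_imp_has_sum) (auto intro!: mult_nonneg_nonneg a0 suminf_nonneg sb b0 M0)
    then show ?thesis by (simp add: has_sum_imp_summable mult.assoc)
  qed
  have "g summable_on Sigma UNIV (\<lambda>_. UNIV)"
    by (rule summable_on_SigmaI[OF gk gs]) (auto simp: g_def intro!: mult_nonneg_nonneg a0 b0 M0)
  have gS: "g summable_on UNIV" using \<open>g summable_on Sigma UNIV (\<lambda>_. UNIV)\<close> by simp
  have "(\<lambda>x. norm (f x)) summable_on UNIV"
  proof (rule Infinite_Sum.abs_summable_on_comparison_test'[OF gS])
    fix x :: "nat \<times> nat"
    obtain k j where x: "x = (k, j)" by (cases x)
    have "norm (f x) = a k * b j * norm (v (k + j))" using a0 b0 by (simp add: f_def x)
    also have "\<dots> \<le> a k * b j * M" using vM a0 b0 by (simp add: mult_left_mono)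
    also have "\<dots> = g x" by (simp add: g_def x)
    finally show "norm (f x) \<le> g x" .
  qed
  then have fs: "f summable_on UNIV" by (rule abs_summable_summable)
  have fbd: "norm (f (k, j)) \<le> a k * M * b j" for k j
  proof -
    have "a k * b j * norm (v (k+j)) \<le> a k * b j * M" using vM[of "k+j"] a0 b0 by (intro mult_left_mono) auto
    then show ?thesis using a0 b0 by (simp add: f_def mult_ac)
  qed
  have inner_norm: "summable (\<lambda>j. norm (f (k, j)))" for k
  proof (rule summable_comparison_test'[where g="\<lambda>j. a k * M * b j"])
    show "summable (\<lambda>j. a k * M * b j)" using sb by (rule summable_mult)
    show "norm (norm (f (k, j))) \<le> a k * M * b j" for j
      using fbd by simp
  qed
  have inner: "a k *\<^sub>R (\<Sum>j. b j *\<^sub>R v (k + j)) = (\<Sum>j. f (k, j))" for k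
  proof -
    have "summable (\<lambda>j. b j *\<^sub>R v (k + j))"
    proof (rule summable_comparison_test'[where g="\<lambda>j. M * b j"])
      show "summable (\<lambda>j. M * b j)" using sb by (rule summable_mult)
      show "norm (b j *\<^sub>R v (k + j)) \<le> M * b j" for j
        using mult_left_mono[OF vM[of "k + j"] b0[of j]] b0[of j] by (simp add: mult.commute)
    qed
    then show ?thesis by (simp add: suminf_scaleR_right f_def)
  qed
  have inner_bd: "norm (\<Sum>j. f (k, j)) \<le> a k * M * suminf b" for k
  proof -
    have "norm (\<Sum>j. f (k, j)) \<le> (\<Sum>j. norm (f (k, j)))" by (rule summable_norm[OF inner_norm])
    also have "\<dots> \<le> (\<Sum>j. a k * M * b j)"
      by (rule suminf_le) (use fbd inner_norm summable_mult[OF sb] in auto)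
    also have "\<dots> = a k * M * suminf b" using suminf_mult[OF sb] by simp
    finally show ?thesis .
  qed
  have outer_norm: "summable (\<lambda>k. norm (\<Sum>j. f (k, j)))"
  proof (rule summable_comparison_test'[where g="\<lambda>k. a k * (M * suminf b)"])
    show "summable (\<lambda>k. a k * (M * suminf b))" using sa by (rule summable_mult2)
    show "norm (norm (\<Sum>j. f (k, j))) \<le> a k * (M * suminf b)" for k using inner_bd[of k] by (simp add: mult_ac)
  qed
  have "(\<Sum>k. a k *\<^sub>R (\<Sum>j. b j *\<^sub>R v (k + j))) = (\<Sum>k. \<Sum>j. f (k, j))" by (simp add: inner)
  also have "\<dots> = infsum (\<lambda>k. infsum (\<lambda>j. f (k, j)) UNIV) UNIV"
    by (simp add: suminf_eq_infsum_nat[OF inner_norm] suminf_eq_infsum_nat[OF outer_norm, unfolded suminf_eq_infsum_nat[OF inner_norm]])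
  also have "\<dots> = infsum f (Sigma UNIV (\<lambda>_. UNIV))"
    by (rule infsum_Sigma_banach) (use fs in simp)
  finally have L: "(\<Sum>k. a k *\<^sub>R (\<Sum>j. b j *\<^sub>R v (k + j))) = infsum f UNIV" by simp
  define S where "S = Sigma (UNIV :: nat set) (\<lambda>n. {..n})"
  define h where "h = (\<lambda>(n::nat, k::nat). (k, n - k))"
  have bij: "bij_betw h S UNIV"
  proof (rule bij_betw_byWitness[where f'="\<lambda>(k, j). (k + j, k)"])
    show "\<forall>x\<in>S. (\<lambda>(k, j). (k + j, k)) (h x) = x" by (auto simp: S_def h_def)
    show "\<forall>y\<in>UNIV. h ((\<lambda>(k, j). (k + j, k)) y) = y" by (auto simp: h_def)
    show "h ` S \<subseteq> UNIV" by simp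
    show "(\<lambda>(k, j). (k + j, k)) ` UNIV \<subseteq> S" by (auto simp: S_def)
  qed
  have fhs: "(\<lambda>x. f (h x)) summable_on S" using summable_on_reindex_bij_betw[OF bij] fs by blast
  have "infsum f UNIV = infsum (\<lambda>x. f (h x)) S" using infsum_reindex_bij_betw[OF bij, of f] by simp
  also have "\<dots> = infsum (\<lambda>n. infsum (\<lambda>k. f (h (n, k))) {..n}) UNIV"
    unfolding S_def by (rule infsum_Sigma_banach[symmetric]) (use fhs S_def in simp)
  also have "\<dots> = infsum (\<lambda>n. (\<Sum>k\<le>n. a k * b (n - k)) *\<^sub>R v n) UNIV"
    by (simp add: h_def f_def scaleR_sum_left)
  finally have R1: "infsum f UNIV = infsum (\<lambda>n. (\<Sum>k\<le>n. a k * b (n - k)) *\<^sub>R v n) UNIV" .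
  have dsum: "summable (\<lambda>n. \<Sum>k\<le>n. a k * b (n - k))"
    using Cauchy_product_sums[of a b] sa sb a0 b0 by (simp add: sums_summable)
  have Rnorm: "summable (\<lambda>n. norm ((\<Sum>k\<le>n. a k * b (n - k)) *\<^sub>R v n))"
  proof (rule summable_comparison_test'[where g="\<lambda>n. (\<Sum>k\<le>n. a k * b (n - k)) * M"])
    show "summable (\<lambda>n. (\<Sum>k\<le>n. a k * b (n - k)) * M)" using dsum by (rule summable_mult2)
    show "norm (norm ((\<Sum>k\<le>n. a k * b (n - k)) *\<^sub>R v n)) \<le> (\<Sum>k\<le>n. a k * b (n - k)) * M" for n
    proof -
      have d0: "0 \<le> (\<Sum>k\<le>n. a k * b (n - k))" by (intro sum_nonneg mult_nonneg_nonneg a0 b0)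
      then show ?thesis using vM[of n] by (simp add: mult_left_mono)
    qed
  qed
  show ?thesis using L R1 suminf_eq_infsum_nat[OF Rnorm] by simp
qed


definition cf :: "nat \<Rightarrow> real" where
  "cf k = (if k = 0 then 0 else - (((1/2::real) gchoose k) * (-1)^k))"

definition gg :: "nat \<Rightarrow> real" where
  "gg k = ((1/2::real) gchoose k) * (-1)^k"

lemma gg_cf: "gg k = (if k = 0 then 1 else 0) - cf k"
  by (simp add: gg_def cf_def)

lemma cf_nonneg: "cf k \<ge> 0"
proof (cases k)
  case 0 then show ?thesis by (simp add: cf_def)
next
  case (Suc n)
  have e: "((1/2::real) gchoose k) * (-1)^k = pochhammer (-1/2) k / fact k"
    by (simp add: gbinomial_pochhammer power_mult_distrib[symmetric])
  have "pochhammer (-1/2::real) k = (-1/2) * pochhammer (1/2) n"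
    unfolding Suc pochhammer_rec by simp
  also have "\<dots> \<le> 0" using pochhammer_pos[of "1/2::real" n] by simp
  finally have "pochhammer (-1/2::real) k / fact k \<le> 0"
    by (simp add: divide_nonpos_pos)
  then have "((1/2::real) gchoose k) * (-1)^k \<le> 0" using e by simp
  then show ?thesis using Suc by (simp add: cf_def)
qed

lemma cf_conv: "(\<Sum>k\<le>n. cf k * cf (n - k)) = 2 * cf n - (if n = 1 then 1 else 0)"
proof -
  have V: "(\<Sum>k\<le>n. gg k * gg (n - k)) = (-1)^n * (1 gchoose n)"
  proof -
    have "(\<Sum>k\<le>n. gg k * gg (n - k)) = (\<Sum>k\<le>n. (-1)^n * (((1/2::real) gchoose k) * ((1/2) gchoose (n - k))))"
    proof (rule sum.cong[OF refl])
      fix k assume "k \<in> {..n}"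
      then have "(-1::real)^k * (-1)^(n-k) = (-1)^n" by (simp add: power_add[symmetric])
      then show "gg k * gg (n - k) = (-1)^n * (((1/2::real) gchoose k) * ((1/2) gchoose (n - k)))"
      proof -
        have "gg k * gg (n - k) = (((1/2::real) gchoose k) * ((1/2) gchoose (n - k))) * ((-1)^k * (-1)^(n-k))"
          unfolding gg_def by (simp only: mult_ac)
        then show ?thesis using \<open>(-1::real)^k * (-1)^(n-k) = (-1)^n\<close> by (simp only: mult_ac)
      qed
    qed
    also have "\<dots> = (-1)^n * (\<Sum>k\<le>n. ((1/2::real) gchoose k) * ((1/2) gchoose (n - k)))"
      by (simp add: sum_distrib_left)
    also have "(\<Sum>k\<le>n. ((1/2::real) gchoose k) * ((1/2) gchoose (n - k))) = (1/2 + 1/2) gchoose n"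
      using gbinomial_Vandermonde[of "1/2::real" "1/2" n] by (simp add: atLeast0AtMost)
    finally show ?thesis by simp
  qed
  have one: "((1::real) gchoose n) = (if n \<le> 1 then 1 else 0)"
  proof -
    have "(1::real) gchoose n = of_nat (1 choose n)" using binomial_gbinomial[of 1 n, where 'a=real] by simp
    then show ?thesis by (cases n) (auto simp: binomial_eq_0)
  qed
  have "(\<Sum>k\<le>n. gg k * gg (n - k)) =
     (\<Sum>k\<le>n. (if k = 0 then 1 else 0) * (if n - k = 0 then 1 else 0))
     - (\<Sum>k\<le>n. (if k = 0 then 1 else 0) * cf (n - k))
     - (\<Sum>k\<le>n. cf k * (if n - k = 0 then 1 else 0))
     + (\<Sum>k\<le>n. cf k * cf (n - k))"
    unfolding gg_cf by (simp add: algebra_simps sum.distrib sum_subtractf)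
  also have "(\<Sum>k\<le>n. (if k = 0 then 1 else 0) * (if n - k = 0 then 1 else (0::real))) = (if n = 0 then 1 else 0)"
    by (simp add: if_distrib[of "\<lambda>x. x * _"] sum.delta cong: if_cong)
  also have "(\<Sum>k\<le>n. (if k = 0 then 1 else 0) * cf (n - k)) = cf n"
    by (simp add: sum.delta if_distrib[of "\<lambda>x. x * _"] cong: if_cong)
  also have "(\<Sum>k\<le>n. cf k * (if n - k = 0 then 1 else 0)) = cf n"
  proof -
    have "(\<Sum>k\<le>n. cf k * (if n - k = 0 then 1 else 0)) = (\<Sum>k\<le>n. if k = n then cf k else 0)"
      by (rule sum.cong) auto
    then show ?thesis by (simp add: sum.delta')
  qed
  finally show ?thesis using V one by (cases n) (auto simp: cf_def)
qed

lemma cf_partial_le: "(\<Sum>k<N. cf k) \<le> 1"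
proof -
  have le: "(\<Sum>k<N. cf k * t^k) \<le> 1" if t: "0 < t" "t < 1" for t :: real
  proof -
    have "(\<lambda>n. ((1/2::real) gchoose n) * (-t)^n) sums sqrt (1 + - t)"
      by (rule sqrt_series) (use t in simp)
    moreover have "(\<lambda>n. ((1/2::real) gchoose n) * (-t)^n) = (\<lambda>n. gg n * t^n)"
      by (rule ext) (simp add: gg_def power_minus[of t] mult_ac)
    ultimately have s1: "(\<lambda>n. gg n * t^n) sums sqrt (1 - t)" by simp
    have s2: "(\<lambda>n. (if n = 0 then 1 else 0) * t^n) sums 1"
      using sums_single[of 0 "\<lambda>n. t^n"] by (simp add: if_distrib[of "\<lambda>x. x * _"] cong: if_cong)
    have "(\<lambda>n. cf n * t^n) sums (1 - sqrt (1 - t))"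
      using sums_diff[OF s2 s1] by (simp add: gg_cf algebra_simps)
    then have "(\<Sum>k<N. cf k * t^k) \<le> 1 - sqrt (1 - t)"
      using sum_le_suminf[of "\<lambda>n. cf n * t^n" "{..<N}"] cf_nonneg t
      by (auto simp: sums_iff intro!: mult_nonneg_nonneg)
    also have "\<dots> \<le> 1" using t by simp
    finally show ?thesis .
  qed
  have lim: "((\<lambda>t. \<Sum>k<N. cf k * t^k) \<longlongrightarrow> (\<Sum>k<N. cf k * 1^k)) (at_left (1::real))"
    by (intro tendsto_intros)
  have ev: "eventually (\<lambda>t. (\<Sum>k<N. cf k * t^k) \<le> 1) (at_left (1::real))"
  proof -
    have "eventually (\<lambda>t. t \<in> {0<..<1}) (at_left (1::real))" by (rule eventually_at_left_real) simp
    then show ?thesis by (rule eventually_mono) (use le in auto)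
  qed
  have "(\<Sum>k<N. cf k * 1^k) \<le> 1"
    by (rule tendsto_upperbound[OF lim ev]) simp
  then show ?thesis by simp
qed

lemma cf_summable: "summable cf"
  by (rule summableI_nonneg_bounded[OF cf_nonneg cf_partial_le])

lemma cf_suminf_le: "suminf cf \<le> 1"
  by (rule suminf_le_const[OF cf_summable cf_partial_le])


lemma scaleR_scaleC_comm: "scaleR r (scaleC c x) = scaleC c (scaleR r x)"
  by (simp add: scaleC_real scaleC_scaleC mult.commute)

lemma cinner_bl_left: "bounded_linear (\<lambda>z. cinner z y)"
  using bounded_bilinear.bounded_linear_left[OF bounded_bilinear_cinner] by blast

lemma cinner_bl_right: "bounded_linear (\<lambda>z. cinner y z)"
  using bounded_bilinear.bounded_linear_right[OF bounded_bilinear_cinner] by blast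

lemma cinner_suminf_left: "summable f \<Longrightarrow> cinner (suminf f) y = (\<Sum>n. cinner (f n) y)"
  using bounded_linear.suminf[OF cinner_bl_left, of f y] by simp

lemma cinner_suminf_right: "summable f \<Longrightarrow> cinner y (suminf f) = (\<Sum>n. cinner y (f n))"
  using bounded_linear.suminf[OF cinner_bl_right, of f y] by simp

lemma bop_scaleC_self: "bounded_op (\<lambda>y. scaleC c y)"
  using bop_scaleC_op[OF bop_id, of c] by simp

context
  fixes A :: "'a::chilbert_space \<Rightarrow> 'a" and K :: real
  assumes posA: "positive_op A" and Kp: "K > 0" and KA: "\<forall>x. norm (A x) \<le> norm x * K"
begin

lemma bopA: "bounded_op A" using posA unfolding positive_op_def by blast

definition Cop :: "'a \<Rightarrow> 'a" where
  "Cop x = x - scaleC (complex_of_real (1/K)) (A x)"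

lemma Cop_bop: "bounded_op Cop"
proof -
  have "bounded_op (\<lambda>x. scaleC 1 x + scaleC (- complex_of_real (1/K)) (A x))"
    by (rule bop_lincomb[OF bop_id bopA])
  moreover have "(\<lambda>x. scaleC 1 x + scaleC (- complex_of_real (1/K)) (A x)) = Cop"
    by (rule ext) (simp add: Cop_def scaleC_one scaleC_minus_left)
  ultimately show ?thesis by simp
qed

lemma Cop_herm: "cinner (Cop x) y = cinner x (Cop y)"
  unfolding Cop_def
  by (simp add: cinner_diff_left cinner_diff_right cinner_scaleC_left cinner_scaleC_right positive_herm[OF posA])

lemma Cop_norm: "norm (Cop x) \<le> norm x"
proof -
  define r where "r = Re (cinner (A x) x)"
  have r0: "r \<ge> 0" using posA unfolding positive_op_def r_def by blast
  have xAx: "cinner x (A x) = complex_of_real r"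
    using positive_herm[OF posA, of x x] positive_re[OF posA, of x] unfolding r_def by simp
  have nK: "cmod (1 / complex_of_real K) = 1/K" using Kp by (simp add: norm_divide)
  have nA: "(norm (A x))^2 \<le> K * r" unfolding r_def by (rule positive_norm_bound[OF posA KA Kp])
  have "(norm (Cop x))^2 = (norm x)^2 + (norm (scaleC (complex_of_real (1/K)) (A x)))^2
      - 2 * Re (cinner x (scaleC (complex_of_real (1/K)) (A x)))"
    unfolding Cop_def by (rule norm_sq_cinner_diff)
  also have "\<dots> = (norm x)^2 + (1/K)^2 * (norm (A x))^2 - 2 * (1/K) * r"
    using Kp nK by (simp add: norm_scaleC cinner_scaleC_right xAx power_mult_distrib power_divide)
  also have "(1/K)^2 * (norm (A x))^2 \<le> (1/K)^2 * (K * r)"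
    by (rule mult_left_mono[OF nA]) simp
  also have "(1/K)^2 * (K * r) = (1/K) * r" using Kp by (simp add: power2_eq_square field_simps)
  finally have "(norm (Cop x))^2 \<le> (norm x)^2 - (1/K) * r" by simp
  also have "\<dots> \<le> (norm x)^2" using r0 Kp by simp
  finally show ?thesis by (simp add: power_mono_iff)
qed

lemma Cop_comm: "bounded_op B \<Longrightarrow> (\<And>x. B (A x) = A (B x)) \<Longrightarrow> B (Cop x) = Cop (B x)"
  unfolding Cop_def by (simp add: bop_diff bop_scaleC)

lemma Cpow_bop: "bounded_op (Cop ^^ k)"
proof (induction k)
  case 0 then show ?case using bop_id by (simp add: id_def)
next
  case (Suc k)
  have "Cop ^^ Suc k = (\<lambda>x. Cop ((Cop ^^ k) x))" by (simp add: fun_eq_iff)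
  then show ?case using bop_comp'[OF Cop_bop Suc.IH] by simp
qed

lemma Cpow_herm: "cinner ((Cop ^^ k) x) y = cinner x ((Cop ^^ k) y)"
proof (induction k arbitrary: x y)
  case 0 then show ?case by simp
next
  case (Suc k)
  have "cinner ((Cop ^^ Suc k) x) y = cinner (Cop ((Cop ^^ k) x)) y" by simp
  also have "\<dots> = cinner ((Cop ^^ k) x) (Cop y)" by (rule Cop_herm)
  also have "\<dots> = cinner x ((Cop ^^ k) (Cop y))" by (rule Suc)
  also have "(Cop ^^ k) (Cop y) = (Cop ^^ Suc k) y" by (simp add: funpow_Suc_right del: funpow.simps)
  finally show ?case .
qed

lemma Cpow_norm: "norm ((Cop ^^ k) x) \<le> norm x"
proof (induction k)
  case 0 then show ?case by simp
next
  case (Suc k) then show ?case using Cop_norm[of "(Cop ^^ k) x"] by simp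
qed

lemma Cpow_comm: "bounded_op B \<Longrightarrow> (\<And>x. B (A x) = A (B x)) \<Longrightarrow> B ((Cop ^^ k) x) = (Cop ^^ k) (B x)"
  by (induction k) (simp_all add: Cop_comm)

definition Qop :: "'a \<Rightarrow> 'a" where
  "Qop x = (\<Sum>k. cf k *\<^sub>R (Cop ^^ k) x)"

lemma Q_norm_summable: "summable (\<lambda>k. norm (cf k *\<^sub>R (Cop ^^ k) x))"
proof (rule summable_comparison_test'[where g="\<lambda>k. cf k * norm x"])
  show "summable (\<lambda>k. cf k * norm x)" using cf_summable by (rule summable_mult2)
  show "norm (norm (cf k *\<^sub>R (Cop ^^ k) x)) \<le> cf k * norm x" for k
    using mult_left_mono[OF Cpow_norm[of k x] cf_nonneg[of k]] cf_nonneg[of k] by simp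
qed

lemma Q_summable: "summable (\<lambda>k. cf k *\<^sub>R (Cop ^^ k) x)"
  by (rule summable_norm_cancel) (rule Q_norm_summable)

lemma Q_norm: "norm (Qop x) \<le> norm x"
proof -
  have "norm (Qop x) \<le> (\<Sum>k. norm (cf k *\<^sub>R (Cop ^^ k) x))"
    unfolding Qop_def by (rule summable_norm[OF Q_norm_summable])
  also have "\<dots> \<le> (\<Sum>k. cf k * norm x)"
  proof (rule suminf_le)
    show "norm (cf k *\<^sub>R (Cop ^^ k) x) \<le> cf k * norm x" for k
      using mult_left_mono[OF Cpow_norm[of k x] cf_nonneg[of k]] cf_nonneg[of k] by simp
  qed (use Q_norm_summable summable_mult2[OF cf_summable] in auto)
  also have "\<dots> = suminf cf * norm x" using suminf_mult2[OF cf_summable] by simp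
  also have "\<dots> \<le> 1 * norm x" by (rule mult_right_mono[OF cf_suminf_le]) simp
  finally show ?thesis by simp
qed

lemma Q_bop: "bounded_op Qop"
proof -
  have add: "Qop (x + y) = Qop x + Qop y" for x y
  proof -
    have "Qop (x + y) = (\<Sum>k. cf k *\<^sub>R (Cop ^^ k) x + cf k *\<^sub>R (Cop ^^ k) y)"
      unfolding Qop_def by (simp add: bop_add[OF Cpow_bop] scaleR_add_right)
    also have "\<dots> = Qop x + Qop y" unfolding Qop_def by (rule suminf_add[OF Q_summable Q_summable, symmetric])
    finally show ?thesis .
  qed
  have sc: "Qop (scaleC c x) = scaleC c (Qop x)" for c x
  proof -
    have "Qop (scaleC c x) = (\<Sum>k. scaleC c (cf k *\<^sub>R (Cop ^^ k) x))"
      unfolding Qop_def by (simp add: bop_scaleC[OF Cpow_bop] scaleR_scaleC_comm)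
    also have "\<dots> = scaleC c (Qop x)" unfolding Qop_def
      by (rule bop_suminf[OF bop_scaleC_self Q_summable, symmetric])
    finally show ?thesis .
  qed
  show ?thesis unfolding bounded_op_def using add sc Q_norm by (auto intro!: exI[of _ 1])
qed

lemma Q_herm: "cinner (Qop x) y = cinner x (Qop y)"
proof -
  have "cinner (Qop x) y = (\<Sum>k. cinner (cf k *\<^sub>R (Cop ^^ k) x) y)"
    unfolding Qop_def by (rule cinner_suminf_left[OF Q_summable])
  also have "\<dots> = (\<Sum>k. cinner x (cf k *\<^sub>R (Cop ^^ k) y))"
    by (simp add: cinner_scaleR_left cinner_scaleR_right Cpow_herm)
  also have "\<dots> = cinner x (Qop y)"
    unfolding Qop_def by (rule cinner_suminf_right[OF Q_summable, symmetric])
  finally show ?thesis .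
qed

lemma Q_comm: "bounded_op B \<Longrightarrow> (\<And>x. B (A x) = A (B x)) \<Longrightarrow> B (Qop x) = Qop (B x)"
  unfolding Qop_def by (simp add: bop_suminf[OF _ Q_summable] bop_scaleR Cpow_comm)

lemma QQ: "Qop (Qop x) = 2 *\<^sub>R Qop x - Cop x"
proof -
  define v where "v = (\<lambda>n. (Cop ^^ n) x)"
  have vM: "norm (v n) \<le> norm x" for n unfolding v_def by (rule Cpow_norm)
  have "Qop (Qop x) = (\<Sum>k. cf k *\<^sub>R (Cop ^^ k) (\<Sum>j. cf j *\<^sub>R v j))"
    unfolding Qop_def v_def ..
  also have "\<dots> = (\<Sum>k. cf k *\<^sub>R (\<Sum>j. cf j *\<^sub>R v (k + j)))"
  proof -
    have "(Cop ^^ k) (\<Sum>j. cf j *\<^sub>R v j) = (\<Sum>j. cf j *\<^sub>R v (k + j))" for k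
    proof -
      have "(Cop ^^ k) (\<Sum>j. cf j *\<^sub>R v j) = (\<Sum>j. (Cop ^^ k) (cf j *\<^sub>R v j))"
        by (rule bop_suminf[OF Cpow_bop]) (use Q_summable in \<open>simp add: v_def\<close>)
      also have "\<dots> = (\<Sum>j. cf j *\<^sub>R v (k + j))"
        by (simp add: bop_scaleR[OF Cpow_bop] v_def funpow_add)
      finally show ?thesis .
    qed
    then show ?thesis by simp
  qed
  also have "\<dots> = (\<Sum>n. (\<Sum>k\<le>n. cf k * cf (n - k)) *\<^sub>R v n)"
    by (rule cauchy_vec[OF cf_nonneg cf_nonneg cf_summable cf_summable vM])
  also have "\<dots> = (\<Sum>n. 2 *\<^sub>R (cf n *\<^sub>R v n) - (if n = 1 then v n else 0))"
    by (rule arg_cong[where f=suminf]) (simp add: fun_eq_iff cf_conv scaleR_diff_left)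
  also have "\<dots> = (\<Sum>n. 2 *\<^sub>R (cf n *\<^sub>R v n)) - (\<Sum>n. (if n = 1 then v n else 0))"
  proof (rule suminf_diff[symmetric])
    show "summable (\<lambda>n. 2 *\<^sub>R (cf n *\<^sub>R v n))"
      using summable_scaleR_right[OF Q_summable] by (simp add: v_def)
    show "summable (\<lambda>n. if n = 1 then v n else 0)" by (rule summable_single)
  qed
  also have "(\<Sum>n. 2 *\<^sub>R (cf n *\<^sub>R v n)) = 2 *\<^sub>R Qop x"
    unfolding Qop_def v_def by (rule suminf_scaleR_right[OF Q_summable, symmetric])
  also have "(\<Sum>n. (if n = 1 then v n else 0)) = v 1" using sums_single[of 1 v] by (simp add: sums_iff)
  also have "v 1 = Cop x" by (simp add: v_def)
  finally show ?thesis .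
qed

definition S0 :: "'a \<Rightarrow> 'a" where "S0 x = x - Qop x"

lemma S0_bop: "bounded_op S0"
proof -
  have "bounded_op (\<lambda>x. x - Qop x)" by (rule bop_diff_op[OF bop_id Q_bop])
  then show ?thesis by (simp add: S0_def[abs_def])
qed

lemma S0S0: "S0 (S0 x) = scaleC (complex_of_real (1/K)) (A x)"
proof -
  have "S0 (S0 x) = x - Qop x - (Qop x - Qop (Qop x))"
    unfolding S0_def by (simp add: bop_diff[OF Q_bop])
  also have "\<dots> = x - Cop x" by (simp add: QQ scaleR_2)
  finally show ?thesis by (simp add: Cop_def)
qed

lemma S0_pos: "Im (cinner (S0 x) x) = 0 \<and> 0 \<le> Re (cinner (S0 x) x)"
proof -
  have "cinner (Qop x) x = cnj (cinner (Qop x) x)"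
    using Q_herm[of x x] by (subst (2) cinner_commute) simp
  then have im: "Im (cinner (Qop x) x) = 0" by (simp add: complex_eq_iff)
  have "Re (cinner (Qop x) x) \<le> cmod (cinner (Qop x) x)" by (rule complex_Re_le_cmod)
  also have "\<dots> \<le> norm (Qop x) * norm x" by (rule cinner_cauchy_schwarz)
  also have "\<dots> \<le> norm x * norm x" by (rule mult_right_mono[OF Q_norm]) simp
  finally have re: "Re (cinner (Qop x) x) \<le> (norm x)^2" by (simp add: power2_eq_square)
  show ?thesis using im re unfolding S0_def
    by (simp add: cinner_diff_left cinner_self)
qed

definition Rt :: "'a \<Rightarrow> 'a" where "Rt x = scaleC (complex_of_real (sqrt K)) (S0 x)"

lemma Rt_pos: "positive_op Rt"
proof -
  have "bounded_op Rt" using bop_scaleC_op[OF S0_bop] by (simp add: Rt_def[abs_def])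
  moreover have "Im (cinner (Rt x) x) = 0 \<and> 0 \<le> Re (cinner (Rt x) x)" for x
    using S0_pos[of x] Kp by (simp add: Rt_def cinner_scaleC_left)
  ultimately show ?thesis unfolding positive_op_def by blast
qed

lemma RtRt: "Rt (Rt x) = A x"
proof -
  have "Rt (Rt x) = scaleC (complex_of_real (sqrt K) * complex_of_real (sqrt K)) (S0 (S0 x))"
    unfolding Rt_def by (simp add: bop_scaleC[OF S0_bop] scaleC_scaleC)
  also have "\<dots> = scaleC (complex_of_real K * complex_of_real (1/K)) (A x)"
    using Kp by (simp add: S0S0 scaleC_scaleC of_real_mult[symmetric] del: of_real_mult)
  also have "\<dots> = A x" using Kp by (simp add: of_real_mult[symmetric] scaleC_one del: of_real_mult)
  finally show ?thesis .
qed

lemma Rt_comm: "bounded_op B \<Longrightarrow> (\<And>x. B (A x) = A (B x)) \<Longrightarrow> B (Rt x) = Rt (B x)"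
  unfolding Rt_def S0_def by (simp add: bop_scaleC bop_diff Q_comm)

lemma Rt_unique:
  assumes B: "positive_op B" and BB: "\<And>x. B (B x) = A x"
  shows "B x = Rt x"
proof -
  have bB: "bounded_op B" using B unfolding positive_op_def by blast
  have comm: "B (A z) = A (B z)" for z using BB[of "B z"] BB[of z] by simp
  define y where "y = B x - Rt x"
  have "B y + Rt y = 0"
    unfolding y_def using bop_diff[OF bB] bop_diff[OF positive_op_def[THEN iffD1, OF Rt_pos, THEN conjunct1]]
      Rt_comm[OF bB comm, of x] BB[of x] RtRt[of x] by simp
  then have By: "B y = - Rt y" by (simp add: eq_neg_iff_add_eq_0)
  have r1: "0 \<le> Re (cinner (B y) y)" using B unfolding positive_op_def by blast
  have r2: "0 \<le> Re (cinner (Rt y) y)" using Rt_pos unfolding positive_op_def by blast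
  have "Re (cinner (B y) y) = - Re (cinner (Rt y) y)" by (simp add: By cinner_minus_left)
  then have z1: "Re (cinner (B y) y) = 0" and z2: "Re (cinner (Rt y) y) = 0" using r1 r2 by linarith+
  obtain KB where KB: "KB > 0" "\<forall>x. norm (B x) \<le> norm x * KB" using bop_bound[OF bB] by blast
  have "(norm (B y))^2 \<le> KB * 0" using positive_norm_bound[OF B KB(2) KB(1), of y] z1 by simp
  then have B0: "B y = 0" by simp
  then have R0: "Rt y = 0" using By by simp
  have "cinner y y = cinner (B x) y - cinner (Rt x) y" unfolding y_def by (simp add: cinner_diff_left)
  also have "\<dots> = cinner x (B y) - cinner x (Rt y)"
    by (simp add: positive_herm[OF B] positive_herm[OF Rt_pos])
  also have "\<dots> = 0" using B0 R0 by simp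
  finally have "y = 0" by (simp add: cinner_self_eq_zero)
  then show ?thesis unfolding y_def by simp
qed

lemma op_sqrt_eq: "op_sqrt A = Rt"
  unfolding op_sqrt_def
proof (rule the_equality)
  show "positive_op Rt \<and> Rt \<circ> Rt = A" using Rt_pos RtRt by (auto simp: o_def)
  fix B assume "positive_op B \<and> B \<circ> B = A"
  then have "positive_op B" "\<And>x. B (B x) = A x" by (auto simp: fun_eq_iff)
  then show "B = Rt" using Rt_unique by blast
qed

end

lemma op_sqrt_props:
  assumes A: "positive_op A"
  shows "positive_op (op_sqrt A) \<and> (\<forall>x. op_sqrt A (op_sqrt A x) = A x)"
proof -
  have bA: "bounded_op A" using A unfolding positive_op_def by blast
  obtain K where K: "K > 0" "\<forall>x. norm (A x) \<le> norm x * K" using bop_bound[OF bA] by blast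
  show ?thesis using op_sqrt_eq[OF A K] Rt_pos[OF A K] RtRt[OF A K] by simp
qed


lemma baire_step:
  assumes A: "bounded_op A" and M: "closed (range A)"
  shows "\<exists>n::nat. \<exists>y0\<in>range A. \<exists>e>0. \<forall>y\<in>range A. dist y y0 < e \<longrightarrow> y \<in> closure (A ` cball 0 (real n))"
proof -
  define F where "F = (\<lambda>n::nat. range A \<inter> closure (A ` cball 0 (real n)))"
  define X where "X = top_of_set (range A)"
  have cm: "completely_metrizable_space X"
  proof -
    have "closedin euclidean (range A)" using M closed_closedin by blast
    from completely_metrizable_space_closedin[OF completely_metrizable_space_euclidean this]
    show ?thesis unfolding X_def .
  qed
  have cl: "closedin X (F n)" for n unfolding X_def F_def by (rule closedin_closed_Int) simp
  have U: "\<Union> (range F) = range A"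
  proof
    show "\<Union> (range F) \<subseteq> range A" unfolding F_def by auto
    show "range A \<subseteq> \<Union> (range F)"
    proof
      fix y assume "y \<in> range A"
      then obtain x where x: "y = A x" by blast
      obtain n :: nat where "norm x \<le> real n" using real_arch_simple[of "norm x"] by (elim exE)
      then have "y \<in> A ` cball 0 (real n)" using x by auto
      then have "y \<in> closure (A ` cball 0 (real n))" by (rule subsetD[OF closure_subset])
      then have "y \<in> F n" unfolding F_def using \<open>y \<in> range A\<close> by simp
      then show "y \<in> \<Union> (range F)" by (rule UN_I[rotated]) simp
    qed
  qed
  have "\<exists>n. X interior_of (F n) \<noteq> {}"
  proof (rule ccontr)
    assume "\<not> ?thesis"
    then have "\<And>T. T \<in> range F \<Longrightarrow> closedin X T \<and> X interior_of T = {}" using cl by auto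
    then have "X interior_of \<Union> (range F) = {}"
      by (intro Baire_category_alt) (use cm in auto)
    moreover have "X interior_of \<Union> (range F) = range A"
      unfolding U X_def using interior_of_topspace[of "top_of_set (range A)"] by simp
    ultimately show False by auto
  qed
  then obtain n y0 where y0: "y0 \<in> X interior_of (F n)" by blast
  then obtain T where T: "openin X T" "y0 \<in> T" "T \<subseteq> F n" unfolding interior_of_def by blast
  have T2: "T \<subseteq> range A \<and> (\<forall>x\<in>T. \<exists>e>0. \<forall>x'\<in>range A. dist x' x < e \<longrightarrow> x' \<in> T)"
    using T(1) unfolding X_def openin_euclidean_subtopology_iff .
  then obtain e where e: "e > 0" "\<forall>y\<in>range A. dist y y0 < e \<longrightarrow> y \<in> T"
    using T(2) by blast
  have y0A: "y0 \<in> range A" using T2 T(2) by blast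
  have "\<forall>y\<in>range A. dist y y0 < e \<longrightarrow> y \<in> closure (A ` cball 0 (real n))"
    using e(2) T(3) unfolding F_def by blast
  then show ?thesis using y0A e(1) by blast
qed

lemma closure_diff_cball:
  assumes A: "bounded_op A" and a: "a \<in> closure (A ` cball 0 r)" and b: "b \<in> closure (A ` cball 0 r)"
  shows "a - b \<in> closure (A ` cball 0 (2 * r))"
proof -
  from a obtain u where u: "\<And>n. u n \<in> A ` cball 0 r" "u \<longlonglongrightarrow> a" unfolding closure_sequential by blast
  from b obtain v where v: "\<And>n. v n \<in> A ` cball 0 r" "v \<longlonglongrightarrow> b" unfolding closure_sequential by blast
  have "u n - v n \<in> A ` cball 0 (2 * r)" for n
  proof -
    obtain x where x: "u n = A x" "norm x \<le> r" using u(1)[of n] by auto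
    obtain x' where x': "v n = A x'" "norm x' \<le> r" using v(1)[of n] by auto
    have "norm (x - x') \<le> 2 * r" using norm_triangle_ineq4[of x x'] x x' by simp
    then have "x - x' \<in> cball 0 (2 * r)" by simp
    moreover have "u n - v n = A (x - x')" using x x' bop_diff[OF A, of x x'] by simp
    ultimately show ?thesis by (rule rev_image_eqI)
  qed
  moreover have "(\<lambda>n. u n - v n) \<longlonglongrightarrow> a - b" by (intro tendsto_intros u v)
  ultimately show ?thesis unfolding closure_sequential by (intro exI[of _ "\<lambda>n. u n - v n"]) simp
qed

lemma approx_step:
  assumes A: "bounded_op A" and M: "closed (range A)"
  shows "\<exists>L>0. \<forall>z\<in>range A. \<exists>x. norm x \<le> L * norm z \<and> norm (z - A x) \<le> norm z / 2"
proof -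
  obtain n y0 e where y0: "y0 \<in> range A" and e: "e > 0"
    and ball: "\<forall>y\<in>range A. dist y y0 < e \<longrightarrow> y \<in> closure (A ` cball 0 (real n))"
    using baire_step[OF A M] by blast
  define N where "N = 2 * real n"
  have small: "z \<in> closure (A ` cball 0 N)" if zA: "z \<in> range A" and zn: "norm z < e" for z
  proof -
    obtain a where a1: "y0 = A a" using y0 by blast
    obtain b where b1: "z = A b" using zA by blast
    have "y0 + z \<in> range A" unfolding a1 b1 bop_add[OF A, symmetric] by simp
    moreover have "dist (y0 + z) y0 < e" using zn by (simp add: dist_norm)
    ultimately have a: "y0 + z \<in> closure (A ` cball 0 (real n))" using ball by blast
    have b: "y0 \<in> closure (A ` cball 0 (real n))" using ball[rule_format, OF y0] e by simp
    show ?thesis using closure_diff_cball[OF A a b] unfolding N_def by simp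
  qed
  define L where "L = 2 * N / e + 1"
  have L: "L > 0" unfolding L_def N_def using e by (simp add: add_nonneg_pos)
  have "\<exists>x. norm x \<le> L * norm z \<and> norm (z - A x) \<le> norm z / 2" if z: "z \<in> range A" for z
  proof (cases "z = 0")
    case True then show ?thesis using A by (intro exI[of _ 0]) simp
  next
    case False
    then have nz: "norm z > 0" by simp
    define s where "s = e / (2 * norm z)"
    have s: "s > 0" unfolding s_def using e nz by simp
    obtain b where b: "z = A b" using z by blast
    have zs: "scaleR s z \<in> range A" unfolding b bop_scaleR[OF A, symmetric] by simp
    have "norm (scaleR s z) = e / 2" unfolding s_def using nz e by simp
    then have "scaleR s z \<in> closure (A ` cball 0 N)" using small[OF zs] e by simp
    moreover have "s * (norm z / 2) > 0" using s nz by simp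
    ultimately obtain w where w: "w \<in> A ` cball 0 N" "dist w (scaleR s z) < s * (norm z / 2)"
      unfolding closure_approachable by blast
    then obtain x' where x': "w = A x'" "norm x' \<le> N" by auto
    define x where "x = scaleR (1/s) x'"
    have Ax: "A x = scaleR (1/s) w" unfolding x_def x'(1) by (rule bop_scaleR[OF A])
    have "norm (z - A x) = norm (scaleR (1/s) (scaleR s z - w))"
      unfolding Ax using s by (simp add: scaleR_diff_right)
    also have "\<dots> = (1/s) * norm (scaleR s z - w)" using s by simp
    also have "\<dots> \<le> (1/s) * (s * (norm z / 2))"
      using w(2) s by (intro mult_left_mono) (auto simp: dist_norm norm_minus_commute)
    also have "\<dots> = norm z / 2" using s by simp
    finally have r1: "norm (z - A x) \<le> norm z / 2" .
    have "norm x = (1/s) * norm x'" unfolding x_def using s by simp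
    also have "\<dots> \<le> (1/s) * N" using x'(2) s by (intro mult_left_mono) auto
    also have "\<dots> = (2 * N / e) * norm z" unfolding s_def using e nz by (simp add: field_simps)
    also have "\<dots> \<le> L * norm z" unfolding L_def using nz by (simp add: distrib_right)
    finally show ?thesis using r1 by blast
  qed
  then show ?thesis using L by blast
qed

lemma open_mapping_range:
  assumes A: "bounded_op A" and M: "closed (range A)"
  shows "\<exists>L>0. \<forall>y\<in>range A. \<exists>x. A x = y \<and> norm x \<le> L * norm y"
proof -
  obtain L where L: "L > 0" and st: "\<forall>z\<in>range A. \<exists>x. norm x \<le> L * norm z \<and> norm (z - A x) \<le> norm z / 2"
    using approx_step[OF A M] by blast
  obtain g where g: "\<And>z. z \<in> range A \<Longrightarrow> norm (g z) \<le> L * norm z \<and> norm (z - A (g z)) \<le> norm z / 2"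
    using bchoice[OF st] by blast
  have "\<exists>x. A x = y \<and> norm x \<le> (2 * L) * norm y" if y: "y \<in> range A" for y
  proof -
    define r where "r = rec_nat y (\<lambda>k rk. rk - A (g rk))"
    have r0: "r 0 = y" and rS: "\<And>k. r (Suc k) = r k - A (g (r k))" unfolding r_def by simp_all
    have rM: "r k \<in> range A" for k
    proof (induction k)
      case 0 then show ?case using y r0 by simp
    next
      case (Suc k)
      have "r k - A (g (r k)) = A (inv A (r k) - g (r k))"
        using Suc bop_diff[OF A] by (simp add: f_inv_into_f)
      then show ?case unfolding rS by simp
    qed
    have rn: "norm (r k) \<le> norm y / 2^k" for k
    proof (induction k)
      case 0 then show ?case using r0 by simp
    next
      case (Suc k)
      have "norm (r (Suc k)) \<le> norm (r k) / 2" unfolding rS using g[OF rM[of k]] by simp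
      also have "\<dots> \<le> norm y / 2^k / 2" using Suc by simp
      finally show ?case by simp
    qed
    define x where "x = (\<lambda>k. g (r k))"
    have xn: "norm (x k) \<le> L * norm y * (1/2)^k" for k
    proof -
      have "norm (x k) \<le> L * norm (r k)" unfolding x_def using g[OF rM[of k]] by simp
      also have "\<dots> \<le> L * (norm y / 2^k)" using rn L by (intro mult_left_mono) auto
      finally show ?thesis by (simp add: power_divide)
    qed
    have gs: "summable (\<lambda>k. L * norm y * (1/2::real)^k)"
      by (intro summable_mult summable_geometric) simp
    have sn: "summable (\<lambda>k. norm (x k))"
      by (rule summable_comparison_test'[OF gs]) (use xn in simp)
    have sx: "summable x" using summable_norm_cancel[OF sn] .
    have tel: "(\<Sum>k<n. A (x k)) = y - r n" for n
    proof (induction n)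
      case 0 then show ?case using r0 by simp
    next
      case (Suc n) then show ?case using rS[of n] by (simp add: x_def)
    qed
    have rlim: "r \<longlonglongrightarrow> 0"
    proof (rule Lim_null_comparison)
      have "norm (r k) \<le> norm y * (1/2)^k" for k using rn[of k] by (simp add: power_divide)
      then show "\<forall>\<^sub>F k in sequentially. norm (r k) \<le> norm y * (1/2::real)^k" by simp
      have "(\<lambda>k. norm y * (1/2::real)^k) \<longlonglongrightarrow> norm y * 0"
        by (intro tendsto_intros LIMSEQ_power_zero) simp
      then show "(\<lambda>k. norm y * (1/2::real)^k) \<longlonglongrightarrow> 0" by simp
    qed
    have "(\<lambda>n. \<Sum>k<n. A (x k)) \<longlonglongrightarrow> y - 0" unfolding tel by (intro tendsto_intros rlim)
    then have "(\<lambda>k. A (x k)) sums y" by (simp add: sums_def)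
    moreover have "(\<lambda>k. A (x k)) sums A (suminf x)"
      by (rule bounded_linear.sums[OF bop_bounded_linear[OF A] summable_sums[OF sx]])
    ultimately have Ax: "A (suminf x) = y" using sums_unique2 by blast
    have "norm (suminf x) \<le> (\<Sum>k. norm (x k))" by (rule summable_norm[OF sn])
    also have "\<dots> \<le> (\<Sum>k. L * norm y * (1/2::real)^k)"
      by (rule suminf_le) (use xn sn gs in auto)
    also have "\<dots> = L * norm y * 2" using suminf_geometric[of "1/2::real"] suminf_mult[of "\<lambda>k. (1/2::real)^k" "L * norm y"]
      by simp
    finally show ?thesis using Ax by (intro exI[of _ "suminf x"]) (simp add: mult_ac)
  qed
  then show ?thesis using L by (intro exI[of _ "2 * L"]) auto
qed


lemma A_norm_scaleC: "bounded_op A \<Longrightarrow> A_norm A (scaleC a v) = cmod a * A_norm A v"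
proof -
  assume A: "bounded_op A"
  have "cinner (A (scaleC a v)) (scaleC a v) = (a * cnj a) * cinner (A v) v"
    by (simp add: bop_scaleC[OF A] cinner_scaleC_left cinner_scaleC_right mult_ac)
  also have "a * cnj a = complex_of_real ((cmod a)^2)" using complex_norm_square[of a] by simp
  finally have "Re (cinner (A (scaleC a v)) (scaleC a v)) = (cmod a)^2 * Re (cinner (A v) v)" by simp
  then show ?thesis unfolding A_norm_def by (simp add: real_sqrt_mult)
qed

context
  fixes A T :: "'a::chilbert_space \<Rightarrow> 'a" and l :: complex
  assumes posA: "positive_op A"
    and A0: "A \<noteq> (\<lambda>x. 0)"
    and clA: "closed (range A)"
    and TB: "T \<in> B_Ahalf A"
    and lam: "cmod l > A_opnorm A T"
begin

lemma bA: "bounded_op A" using posA unfolding positive_op_def by blast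
lemma bT: "bounded_op T" using TB unfolding B_Ahalf_def by blast

lemma Msub: "csubspace (range A)"
  unfolding csubspace_def
proof (intro conjI ballI allI)
  show "0 \<in> range A" using bop_zero[OF bA] by (metis rangeI)
  fix x y assume "x \<in> range A" "y \<in> range A"
  then obtain a b where "x = A a" "y = A b" by blast
  then show "x + y \<in> range A" using bop_add[OF bA, of a b] by (metis rangeI)
next
  fix c x assume "x \<in> range A"
  then obtain a where "x = A a" by blast
  then show "scaleC c x \<in> range A" using bop_scaleC[OF bA, of c a] by (metis rangeI)
qed

lemma orthM: "(\<forall>z\<in>range A. cinner w z = 0) \<longleftrightarrow> A w = 0"
proof
  assume h: "\<forall>z\<in>range A. cinner w z = 0"
  have "cinner (A w) u = 0" for u using h positive_herm[OF posA, of w u] by simp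
  then show "A w = 0" by (rule cinner_eq_zeroI)
next
  assume "A w = 0"
  then show "\<forall>z\<in>range A. cinner w z = 0" using positive_herm[OF posA, of w] by auto
qed

definition P :: "'a \<Rightarrow> 'a" where "P = proj (range A)"

lemma bP: "bounded_op P" unfolding P_def by (rule proj_bop[OF Msub clA])
lemma PM: "P x \<in> range A" using proj[OF Msub clA] unfolding P_def by blast
lemma Porth: "A (x - P x) = 0"
  using proj[OF Msub clA, of x] orthM unfolding P_def by blast
lemma AP: "A (P x) = A x" using Porth[of x] bop_diff[OF bA] by simp
lemma Pid: "m \<in> range A \<Longrightarrow> P m = m" unfolding P_def by (rule proj_id[OF Msub clA])
lemma Pzero: "A n = 0 \<Longrightarrow> P n = 0" unfolding P_def by (rule proj_orth_zero[OF Msub clA]) (use orthM in blast)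

definition B :: "'a \<Rightarrow> 'a" where "B = op_sqrt A"
lemma posB: "positive_op B" using op_sqrt_props[OF posA] unfolding B_def by blast
lemma BB: "B (B x) = A x" using op_sqrt_props[OF posA] unfolding B_def by blast
lemma bB: "bounded_op B" using posB unfolding positive_op_def by blast
lemma MB: "range A \<subseteq> range B" using BB by (metis image_subsetI rangeI)

lemma T_ker: "A n = 0 \<Longrightarrow> A (T n) = 0"
proof -
  assume n: "A n = 0"
  have "cinner (B n) (B n) = cinner (B (B n)) n" by (rule positive_herm[OF posB, symmetric])
  also have "\<dots> = 0" using n BB by simp
  finally have Bn: "B n = 0" by (simp add: cinner_self_eq_zero)
  have "cinner (T n) (A u) = 0" for u
  proof -
    have "cinner (T n) (A u) = cinner n (adjoint T (B (B u)))" using adjoint_prop[OF bT] BB by simp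
    moreover have "adjoint T (B (B u)) \<in> range B" using TB unfolding B_Ahalf_def B_def by auto
    then obtain y where "adjoint T (B (B u)) = B y" by blast
    ultimately have "cinner (T n) (A u) = cinner n (B y)" by simp
    also have "\<dots> = cinner (B n) y" by (rule positive_herm[OF posB, symmetric])
    finally show ?thesis using Bn by simp
  qed
  then show "A (T n) = 0" using orthM by blast
qed

lemma PTP: "P (T x) = P (T (P x))"
proof -
  have "A (T (x - P x)) = 0" using T_ker[OF Porth] .
  then have "P (T (x - P x)) = 0" by (rule Pzero)
  then show ?thesis by (simp add: bop_diff[OF bT] bop_diff[OF bP])
qed

lemma A_norm_ker: "A w = 0 \<Longrightarrow> A_norm A (v + w) = A_norm A v"
proof -
  assume w: "A w = 0"
  have "cinner (A v) w = cinner v (A w)" by (rule positive_herm[OF posA])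
  then show ?thesis unfolding A_norm_def using w by (simp add: bop_add[OF bA] cinner_add_right)
qed

lemma A_norm_P: "A_norm A (P x) = A_norm A x"
  using A_norm_ker[OF Porth, of "P x" x] by simp

lemma A_norm_upper: obtains KA where "KA > 0" "\<And>v. A_norm A v \<le> sqrt KA * norm v"
    "\<And>v. norm (A v) \<le> sqrt KA * A_norm A v"
proof -
  obtain K where K: "K > 0" "\<forall>x. norm (A x) \<le> norm x * K" using bop_bound[OF bA] by blast
  have "A_norm A v \<le> sqrt K * norm v" for v
  proof -
    have "Re (cinner (A v) v) \<le> norm (A v) * norm v"
      using cinner_cauchy_schwarz[of "A v" v] complex_Re_le_cmod order_trans by blast
    also have "\<dots> \<le> norm v * K * norm v" using K by (simp add: mult_right_mono)
    also have "norm v * K * norm v = (sqrt K * norm v)^2" using K by (simp add: power_mult_distrib power2_eq_square)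
    finally have "Re (cinner (A v) v) \<le> (sqrt K * norm v)^2" .
    then have "sqrt (Re (cinner (A v) v)) \<le> sqrt ((sqrt K * norm v)^2)" by (rule real_sqrt_le_mono)
    then show ?thesis unfolding A_norm_def using K by simp
  qed
  moreover have "norm (A v) \<le> sqrt K * A_norm A v" for v
  proof -
    have "(norm (A v))^2 \<le> K * Re (cinner (A v) v)" by (rule positive_norm_bound[OF posA K(2) K(1)])
    also have "\<dots> = (sqrt K * A_norm A v)^2" unfolding A_norm_def
      using K posA unfolding positive_op_def by (simp add: power_mult_distrib)
    finally have "(norm (A v))^2 \<le> (sqrt K * A_norm A v)^2" .
    moreover have "0 \<le> Re (cinner (A v) v)" using posA unfolding positive_op_def by blast
    then have "0 \<le> sqrt K * A_norm A v" using K unfolding A_norm_def by simp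
    ultimately show ?thesis using power2_le_imp_le by blast
  qed
  ultimately show ?thesis using that K by blast
qed


lemma lowb: obtains c where "c > 0" "\<And>y. y \<in> range A \<Longrightarrow> norm y \<le> c * A_norm A y"
proof -
  obtain L where L: "L > 0" "\<forall>y\<in>range A. \<exists>x. A x = y \<and> norm x \<le> L * norm y"
    using open_mapping_range[OF bA clA] by blast
  obtain KA where KA: "KA > 0" "\<And>v. norm (A v) \<le> sqrt KA * A_norm A v" using A_norm_upper by metis
  have "norm y \<le> (L * sqrt KA) * A_norm A y" if y: "y \<in> range A" for y
  proof -
    obtain x where x: "A x = y" "norm x \<le> L * norm y" using L(2) y by blast
    have "(norm y)^2 = Re (cinner y y)" by (simp add: Re_cinner_self)
    also have "cinner y y = cinner x (A y)" using x(1) positive_herm[OF posA, of x y] by simp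
    also have "Re (cinner x (A y)) \<le> norm x * norm (A y)"
      using cinner_cauchy_schwarz[of x "A y"] complex_Re_le_cmod order_trans by blast
    also have "\<dots> \<le> (L * norm y) * norm (A y)" using x(2) by (simp add: mult_right_mono)
    finally have h: "(norm y)^2 \<le> (L * norm y) * norm (A y)" .
    have "norm y \<le> L * norm (A y)"
    proof (cases "y = 0")
      case True then show ?thesis using L by simp
    next
      case False
      then have "norm y * norm y \<le> (L * norm (A y)) * norm y" using h by (simp add: power2_eq_square mult_ac)
      then show ?thesis using False by simp
    qed
    also have "\<dots> \<le> L * (sqrt KA * A_norm A y)" using KA(2)[of y] L(1) by (simp add: mult_left_mono)
    finally show ?thesis by (simp add: mult_ac)
  qed
  then show ?thesis using that L KA by (metis mult_pos_pos real_sqrt_gt_0_iff)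
qed

lemma A_norm_nonneg: "A_norm A v \<ge> 0" using posA unfolding A_norm_def positive_op_def by simp

lemma cmod_inv_real: "(a::real) > 0 \<Longrightarrow> cmod (1 / complex_of_real a) = 1 / a"
  by (simp add: norm_divide)

definition s :: real where "s = A_opnorm A T"

lemma closM: "closure (range A) = range A" using clA by (rule closure_closed)

definition Sset :: "real set" where
  "Sset = {A_norm A (T x) | x. x \<in> closure (range A) \<and> A_norm A x = 1}"

lemma s_Sup: "s = Sup Sset" unfolding s_def A_opnorm_def Sset_def ..

lemma Sset_bdd: "bdd_above Sset"
proof -
  obtain c where c: "c > 0" "\<And>y. y \<in> range A \<Longrightarrow> norm y \<le> c * A_norm A y" using lowb by metis
  obtain KA where KA: "KA > 0" "\<And>v. A_norm A v \<le> sqrt KA * norm v" using A_norm_upper by metis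
  obtain KT where KT: "KT > 0" "\<forall>x. norm (T x) \<le> norm x * KT" using bop_bound[OF bT] by blast
  have "z \<le> sqrt KA * (c * KT)" if zS: "z \<in> Sset" for z
  proof -
    obtain x where x: "z = A_norm A (T x)" "x \<in> range A" "A_norm A x = 1"
      using zS closM unfolding Sset_def by auto
    have "z \<le> sqrt KA * norm (T x)" using x KA by simp
    also have "\<dots> \<le> sqrt KA * (norm x * KT)" using KT KA by (simp add: mult_left_mono)
    also have "norm x * KT \<le> (c * 1) * KT" using c(2)[OF x(2)] x(3) KT by (simp add: mult_right_mono)
    finally show ?thesis using KA by (simp add: mult_left_mono)
  qed
  then show ?thesis by (rule bdd_aboveI)
qed

lemma Tbound: "x \<in> range A \<Longrightarrow> A_norm A (T x) \<le> s * A_norm A x"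
proof -
  assume x: "x \<in> range A"
  obtain c where c: "c > 0" "\<And>y. y \<in> range A \<Longrightarrow> norm y \<le> c * A_norm A y" using lowb by metis
  show ?thesis
  proof (cases "A_norm A x = 0")
    case True
    then have "x = 0" using c(2)[OF x] by simp
    then show ?thesis using bop_zero[OF bT] by (simp add: A_norm_def True)
  next
    case False
    have a0: "A_norm A x \<ge> 0" using posA unfolding A_norm_def positive_op_def by simp
    then have ap: "A_norm A x > 0" using False by simp
    define a where "a = A_norm A x"
    define x' where "x' = scaleC (complex_of_real (1/a)) x"
    have "x' \<in> range A" using x Msub unfolding x'_def csubspace_def by blast
    moreover have "A_norm A x' = 1" unfolding x'_def a_def using ap by (simp add: A_norm_scaleC[OF bA] norm_divide)
    ultimately have "A_norm A (T x') \<in> Sset" unfolding Sset_def using closM by blast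
    then have "A_norm A (T x') \<le> s" unfolding s_Sup by (rule cSup_upper[OF _ Sset_bdd])
    moreover have "A_norm A (T x') = A_norm A (T x) / a"
      unfolding x'_def a_def using ap by (simp add: bop_scaleC[OF bT] A_norm_scaleC[OF bA] cmod_inv_real)
    ultimately have "A_norm A (T x) / a \<le> s" by simp
    then show ?thesis using ap unfolding a_def by (simp add: field_simps)
  qed
qed

lemma s_nonneg: "s \<ge> 0"
proof -
  obtain c where c: "c > 0" "\<And>y. y \<in> range A \<Longrightarrow> norm y \<le> c * A_norm A y" using lowb by metis
  obtain u where u: "A u \<noteq> 0" using A0 by auto
  have "norm (A u) \<le> c * A_norm A (A u)" using c(2) by simp
  then have ap: "A_norm A (A u) > 0" using u c(1) A_norm_def
    by (smt (verit, best) mult_nonneg_nonneg norm_ge_zero real_sqrt_ge_zero zero_less_norm_iff mult_le_0_iff)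
  define a where "a = A_norm A (A u)"
  define x' where "x' = scaleC (complex_of_real (1/a)) (A u)"
  have "x' \<in> range A" unfolding x'_def using bop_scaleC[OF bA] by (metis rangeI)
  moreover have "A_norm A x' = 1" unfolding x'_def a_def using ap by (simp add: A_norm_scaleC[OF bA] norm_divide)
  ultimately have "A_norm A (T x') \<in> Sset" unfolding Sset_def using closM by blast
  then have "A_norm A (T x') \<le> s" unfolding s_Sup by (rule cSup_upper[OF _ Sset_bdd])
  moreover have "A_norm A (T x') \<ge> 0" by (rule A_norm_nonneg)
  ultimately show ?thesis by simp
qed

lemma l0: "l \<noteq> 0" using lam s_nonneg unfolding s_def by auto

definition T1 :: "'a \<Rightarrow> 'a" where "T1 x = P (T x)"

lemma bT1: "bounded_op T1" unfolding T1_def[abs_def] by (rule bop_comp'[OF bP bT])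

lemma T1bound: "x \<in> range A \<Longrightarrow> A_norm A (T1 x) \<le> s * A_norm A x"
  unfolding T1_def A_norm_P by (rule Tbound)

lemma T1pow_bop: "bounded_op (T1 ^^ n)"
proof (induction n)
  case 0 then show ?case using bop_id by (simp add: id_def)
next
  case (Suc n)
  have "T1 ^^ Suc n = (\<lambda>x. T1 ((T1 ^^ n) x))" by (simp add: fun_eq_iff)
  then show ?case using bop_comp'[OF bT1 Suc.IH] by simp
qed

lemma T1pow_M: "y \<in> range A \<Longrightarrow> (T1 ^^ n) y \<in> range A"
  by (induction n) (auto simp: T1_def PM)

lemma T1pow_bound: "y \<in> range A \<Longrightarrow> A_norm A ((T1 ^^ n) y) \<le> s^n * A_norm A y"
proof (induction n)
  case 0 then show ?case by simp
next
  case (Suc n)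
  have "A_norm A ((T1 ^^ Suc n) y) = A_norm A (T1 ((T1 ^^ n) y))" by simp
  also have "\<dots> \<le> s * A_norm A ((T1 ^^ n) y)" by (rule T1bound[OF T1pow_M[OF Suc.prems]])
  also have "\<dots> \<le> s * (s^n * A_norm A y)" by (rule mult_left_mono[OF Suc.IH[OF Suc.prems] s_nonneg])
  finally show ?case by (simp add: mult_ac)
qed


definition q :: real where "q = s / cmod l"

lemma q0: "q \<ge> 0" unfolding q_def using s_nonneg by simp
lemma q1: "q < 1" unfolding q_def using lam l0 unfolding s_def by simp

definition w :: "'a \<Rightarrow> nat \<Rightarrow> 'a" where "w x n = scaleC (1 / l^n) ((T1 ^^ n) (P x))"

lemma wM: "w x n \<in> range A"
  using T1pow_M[OF PM, of n x] Msub unfolding w_def csubspace_def by blast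

lemma w_bound: obtains D where "D > 0" "\<And>x n. norm (w x n) \<le> D * q^n * norm x"
proof -
  obtain c where c: "c > 0" "\<And>y. y \<in> range A \<Longrightarrow> norm y \<le> c * A_norm A y" using lowb by metis
  obtain KA where KA: "KA > 0" "\<And>v. A_norm A v \<le> sqrt KA * norm v" using A_norm_upper by metis
  have lp: "cmod l > 0" using l0 by simp
  have bnd: "norm (w x n) \<le> (c * sqrt KA) * q^n * norm x" for x n
  proof -
    have "norm (w x n) \<le> c * A_norm A (w x n)" by (rule c(2)[OF wM])
    also have "A_norm A (w x n) = (1 / cmod l ^ n) * A_norm A ((T1 ^^ n) (P x))"
      unfolding w_def by (simp add: A_norm_scaleC[OF bA] norm_divide norm_power)
    also have "\<dots> \<le> (1 / cmod l ^ n) * (s^n * A_norm A (P x))"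
      by (rule mult_left_mono[OF T1pow_bound[OF PM]]) simp
    also have "\<dots> = q^n * A_norm A x" unfolding q_def A_norm_P by (simp add: power_divide)
    also have "\<dots> \<le> q^n * (sqrt KA * norm x)" by (rule mult_left_mono[OF KA(2)]) (simp add: q0)
    finally show ?thesis using c(1) by (simp add: mult_left_mono mult_ac)
  qed
  show ?thesis by (rule that[of "c * sqrt KA"]) (use c(1) KA(1) bnd in auto)
qed

lemma w_norm_summable: "summable (\<lambda>n. norm (w x n))"
proof -
  obtain D where D: "D > 0" "\<And>x n. norm (w x n) \<le> D * q^n * norm x" using w_bound by metis
  have g: "summable (\<lambda>n. D * norm x * q^n)"
    by (intro summable_mult summable_geometric) (use q0 q1 in simp)
  show ?thesis
    by (rule summable_comparison_test'[OF g]) (use D(2) in \<open>simp add: mult_ac\<close>)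
qed

lemma w_summable: "summable (w x)"
  by (rule summable_norm_cancel) (rule w_norm_summable)

lemma w_lim: "w x \<longlonglongrightarrow> 0"
  by (rule summable_LIMSEQ_zero[OF w_summable])

lemma w_Suc: "scaleC (1/l) (T1 (w x n)) = w x (Suc n)"
  unfolding w_def using l0 by (simp add: bop_scaleC[OF bT1] scaleC_scaleC field_simps)

lemma w_zero: "w x 0 = P x" unfolding w_def by (simp add: scaleC_one)

lemma tele: "(\<lambda>n. w x n - w x (Suc n)) sums P x"
  using telescope_sums'[OF w_lim, of x] by (simp add: w_zero)

lemma w_add: "w (x + y) n = w x n + w y n"
  unfolding w_def by (simp add: bop_add[OF bP] bop_add[OF T1pow_bop] scaleC_add_right)

lemma w_scale: "w (scaleC c x) n = scaleC c (w x n)"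
  unfolding w_def by (simp add: bop_scaleC[OF bP] bop_scaleC[OF T1pow_bop] scaleC_scaleC mult.commute)

lemma w_S: "w (scaleC l x - T x) n = scaleC l (w x n - w x (Suc n))"
proof -
  define v where "v = (\<lambda>k. (T1 ^^ k) (P x))"
  have "P (scaleC l x - T x) = scaleC l (P x) - T1 (P x)"
    unfolding T1_def using PTP[of x] by (simp add: bop_diff[OF bP] bop_scaleC[OF bP])
  then have "(T1 ^^ n) (P (scaleC l x - T x)) = scaleC l (v n) - v (Suc n)"
    unfolding v_def by (simp add: bop_diff[OF T1pow_bop] bop_scaleC[OF T1pow_bop] funpow_Suc_right
        del: funpow.simps)
  then have "w (scaleC l x - T x) n = scaleC (1 / l^n) (scaleC l (v n) - v (Suc n))"
    unfolding w_def by simp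
  also have "\<dots> = scaleC (l / l^n) (v n) - scaleC (1 / l^n) (v (Suc n))"
    by (simp add: scaleC_diff_right scaleC_scaleC)
  also have "\<dots> = scaleC l (w x n - w x (Suc n))"
  proof -
    have e1: "w x n = scaleC (1/l^n) (v n)" by (simp add: w_def v_def del: funpow.simps)
    have e2: "w x (Suc n) = scaleC (1/l^Suc n) (v (Suc n))" by (simp add: w_def v_def del: funpow.simps)
    have c1: "l * (1/l^Suc n) = 1/l^n" using l0 by simp
    show ?thesis unfolding e1 e2 using l0 by (simp add: scaleC_diff_right scaleC_scaleC c1)
  qed
  finally show ?thesis .
qed

definition R :: "'a \<Rightarrow> 'a" where "R x = scaleC (1/l) (suminf (w x))"

lemma R_W: "scaleC l (R x) - T1 (R x) = P x"
proof -
  define V where "V = suminf (w x)"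
  have a: "scaleC l (R x) = V" unfolding R_def V_def using l0 by (simp add: scaleC_scaleC scaleC_one)
  have "T1 V = (\<Sum>n. T1 (w x n))" unfolding V_def by (rule bop_suminf[OF bT1 w_summable])
  moreover have sT: "summable (\<lambda>n. T1 (w x n))"
    by (rule bounded_linear.summable[OF bop_bounded_linear[OF bT1] w_summable])
  ultimately have "scaleC (1/l) (T1 V) = (\<Sum>n. scaleC (1/l) (T1 (w x n)))"
    using bop_suminf[OF bop_scaleC_self sT] by simp
  then have b: "T1 (R x) = (\<Sum>n. w x (Suc n))"
    unfolding R_def V_def[symmetric] by (simp add: bop_scaleC[OF bT1] w_Suc)
  have sS: "summable (\<lambda>n. w x (Suc n))" using w_summable summable_Suc_iff by blast
  have "V - (\<Sum>n. w x (Suc n)) = (\<Sum>n. w x n - w x (Suc n))"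
    unfolding V_def by (rule suminf_diff[OF w_summable sS])
  also have "\<dots> = P x" using tele sums_unique by metis
  finally show ?thesis using a b by simp
qed

lemma R_S: "R (scaleC l x - T x) = P x"
proof -
  have st: "summable (\<lambda>n. w x n - w x (Suc n))" using tele sums_summable by blast
  have "suminf (w (scaleC l x - T x)) = (\<Sum>n. scaleC l (w x n - w x (Suc n)))"
    by (rule arg_cong[where f=suminf]) (simp add: fun_eq_iff w_S)
  also have "\<dots> = scaleC l (\<Sum>n. w x n - w x (Suc n))" by (rule bop_suminf[OF bop_scaleC_self st, symmetric])
  also have "(\<Sum>n. w x n - w x (Suc n)) = P x" using tele sums_unique by metis
  finally show ?thesis unfolding R_def using l0 by (simp add: scaleC_scaleC scaleC_one)
qed

lemma bR: "bounded_op R"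
proof -
  obtain D where D: "D > 0" "\<And>x n. norm (w x n) \<le> D * q^n * norm x" using w_bound by metis
  have add: "R (x + y) = R x + R y" for x y
  proof -
    have "w (x + y) = (\<lambda>n. w x n + w y n)" by (simp add: fun_eq_iff w_add)
    then have "suminf (w (x + y)) = suminf (w x) + suminf (w y)"
      using suminf_add[OF w_summable w_summable] by simp
    then show ?thesis unfolding R_def by (simp add: scaleC_add_right)
  qed
  have sc: "R (scaleC c x) = scaleC c (R x)" for c x
  proof -
    have "w (scaleC c x) = (\<lambda>n. scaleC c (w x n))" by (simp add: fun_eq_iff w_scale)
    then have "suminf (w (scaleC c x)) = scaleC c (suminf (w x))"
      using bop_suminf[OF bop_scaleC_self w_summable] by simp
    then show ?thesis unfolding R_def by (simp add: scaleC_scaleC mult.commute)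
  qed
  have bd: "norm (R x) \<le> norm x * ((1 / cmod l) * (D / (1 - q)))" for x
  proof -
    have g: "summable (\<lambda>n. D * norm x * q^n)"
      by (intro summable_mult summable_geometric) (use q0 q1 in simp)
    have "norm (suminf (w x)) \<le> (\<Sum>n. norm (w x n))" by (rule summable_norm[OF w_norm_summable])
    also have "\<dots> \<le> (\<Sum>n. D * norm x * q^n)"
      by (rule suminf_le) (use D(2) w_norm_summable g in \<open>auto simp: mult_ac\<close>)
    also have "\<dots> = D * norm x * (1 / (1 - q))"
      using suminf_mult[OF summable_geometric[of q], of "D * norm x"] suminf_geometric[of q] q0 q1
      by simp
    finally have "norm (suminf (w x)) \<le> norm x * (D / (1 - q))" by (simp add: mult.commute)
    then have "(1 / cmod l) * norm (suminf (w x)) \<le> (1 / cmod l) * (norm x * (D / (1 - q)))"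
      by (rule mult_left_mono) simp
    then show ?thesis unfolding R_def by (simp add: norm_scaleC norm_divide mult_ac)
  qed
  show ?thesis unfolding bounded_op_def using add sc bd by blast
qed

lemma RM: "R x \<in> range A"
proof -
  have ps: "(\<Sum>n<N. w x n) \<in> range A" for N by (rule csubspace_sum[OF Msub]) (rule wM)
  have lim: "(\<lambda>N. \<Sum>n<N. w x n) \<longlonglongrightarrow> suminf (w x)" by (rule summable_LIMSEQ[OF w_summable])
  have "suminf (w x) \<in> range A" by (rule closed_sequentially[OF clA ps lim])
  then show ?thesis unfolding R_def using Msub unfolding csubspace_def by blast
qed

lemma Rker: "A n = 0 \<Longrightarrow> R n = 0"
proof -
  assume "A n = 0"
  then have "P n = 0" by (rule Pzero)
  then have "w n = (\<lambda>k. 0)" unfolding w_def by (simp add: fun_eq_iff bop_zero[OF T1pow_bop])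
  then show ?thesis unfolding R_def by simp
qed


lemma S_bop: "bounded_op (\<lambda>x. scaleC l x - T x)"
  by (rule bop_diff_op[OF bop_scaleC_self bT])

lemma adj_S: "adjoint (\<lambda>x. scaleC l x - T x) = (\<lambda>y. scaleC (cnj l) y - adjoint T y)"
proof (rule adjoint_eq[OF S_bop], intro allI)
  fix x y
  show "cinner (scaleC l x - T x) y = cinner x (scaleC (cnj l) y - adjoint T y)"
    by (simp add: cinner_diff_left cinner_diff_right cinner_scaleC_left cinner_scaleC_right adjoint_prop[OF bT])
qed

lemma S_B: "(\<lambda>x. scaleC l x - T x) \<in> B_Ahalf A"
  unfolding B_Ahalf_def
proof (intro CollectI conjI S_bop subsetI)
  fix v assume "v \<in> range (adjoint (\<lambda>x. scaleC l x - T x) \<circ> op_sqrt A)"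
  then obtain y where y: "v = adjoint (\<lambda>x. scaleC l x - T x) (B y)" unfolding B_def by auto
  have "adjoint T (B y) \<in> range B" using TB unfolding B_Ahalf_def B_def by auto
  then obtain z where z: "adjoint T (B y) = B z" by blast
  have "v = B (scaleC (cnj l) y - z)" unfolding y adj_S using z by (simp add: bop_diff[OF bB] bop_scaleC[OF bB])
  then show "v \<in> range (op_sqrt A)" unfolding B_def by simp
qed

lemma R_B: "R \<in> B_Ahalf A"
  unfolding B_Ahalf_def
proof (intro CollectI conjI bR subsetI)
  fix v assume "v \<in> range (adjoint R \<circ> op_sqrt A)"
  then obtain y where y: "v = adjoint R (B y)" unfolding B_def by auto
  have "v \<in> range A"
  proof (rule orth_in[OF Msub clA])
    fix n assume "\<forall>z\<in>range A. cinner n z = 0"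
    then have "A n = 0" using orthM by blast
    then have "R n = 0" by (rule Rker)
    then show "cinner n v = 0" unfolding y using adjoint_prop[OF bR, of n "B y"] by simp
  qed
  then show "v \<in> range (op_sqrt A)" using MB unfolding B_def by blast
qed

lemma R_nz: "R \<noteq> (\<lambda>x. 0)"
proof
  assume R0: "R = (\<lambda>x. 0)"
  obtain u where u: "A u \<noteq> 0" using A0 by auto
  have "scaleC l (R (A u)) - T1 (R (A u)) = P (A u)" by (rule R_W)
  then have "0 = A u" using R0 Pid[of "A u"] bop_zero[OF bT1] by simp
  then show False using u by simp
qed

lemma comp1: "A \<circ> (\<lambda>x. scaleC l x - T x) \<circ> R = A"
proof
  fix x
  have "A (T (R x)) = A (T1 (R x))" unfolding T1_def by (rule AP[symmetric])
  then have "A (scaleC l (R x) - T (R x)) = A (scaleC l (R x) - T1 (R x))"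
    by (simp add: bop_diff[OF bA])
  also have "\<dots> = A (P x)" by (simp add: R_W)
  also have "\<dots> = A x" by (rule AP)
  finally show "(A \<circ> (\<lambda>x. scaleC l x - T x) \<circ> R) x = A x" by simp
qed

lemma comp2: "A \<circ> R \<circ> (\<lambda>x. scaleC l x - T x) = A"
proof
  fix x
  show "(A \<circ> R \<circ> (\<lambda>x. scaleC l x - T x)) x = A x" by (simp add: R_S AP)
qed

lemma main_res: "l \<in> A_resolvent A T"
  unfolding A_resolvent_def A_invertible_def
  using S_B R_B R_nz comp1 comp2 by blast

end

theorem mainTheorem3:
  fixes A T :: "'a::chilbert_space \<Rightarrow> 'a" and l :: complex
  assumes "positive_op A"
    and "A \<noteq> (\<lambda>x. 0)"
    and "closed (range A)"
    and "T \<in> B_Ahalf A"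
    and "cmod l > A_opnorm A T"
  shows "l \<in> A_resolvent A T"
  using assms by (rule main_res)


end
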